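(* Let $K$ be a field, $S=K[[x_1,\dots,x_n]]$, $E$ the $S$-module described in the context, and fix a term order $\prec$ on $E$. Let $N\subset E$ be an $S$-submodule of finite length. Let $N_0=T_1(N)$, and inductively, as long as $N_{i-1}\neq N$, choose $\xi_i\in N$ with $$\mathrm{LT}_\prec(\xi_i)=\min_\prec\{\mathrm{LT}_\prec(\eta)\mid \eta\in N,\ \mathrm{LT}_\prec(\eta)\notin\mathrm{LT}_\prec(N_{i-1})\},$$ and set $N_i=N_{i-1}+S\xi_i$. Then this yields a finite chain of $S$-modules $T_1(N)=N_0\subset N_1\subset\cdots\subset N_k=N$, and: (1) $N_i/N_{i-1}\cong K$ for all $1\le i\le k$; (2) $\mathrm{LT}_\prec(\xi_1)\prec\mathrm{LT}_\prec(\xi_2)\prec\cdots\prec\mathrm{LT}_\prec(\xi_k)$; (3) each $N_i$ does not depend on the choice of $\xi_i$; (4) $\xi_i$ can be chosen so that no term occurring in $\xi_i$ lies in $\mathrm{LT}_\prec(N_{i-1})$, and such a $\xi_i$ is unique up to multiplication by an element of $K^\times$.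
   Context: $E=K[x_1^{-1},\dots,x_n^{-1}]\cdot\frac{1}{x_1\cdots x_n}$ is the $K$-vector space with basis the terms $\frac{1}{x^{\alpha+1}}=\frac{1}{x_1^{\alpha_1+1}\cdots x_n^{\alpha_n+1}}$, $\alpha\in\mathbb{Z}^n_{\ge0}$, with $S$-module structure $x^{\gamma}\cdot\frac{1}{x^{\beta+1}}=\frac{1}{x^{\beta-\gamma+1}}$ if $\beta-\gamma\in\mathbb{Z}^n_{\ge0}$ and $0$ otherwise, extended bilinearly. A term order on $E$ is a total order $\prec$ on terms such that $\frac{1}{x_1\cdots x_n}\preceq\frac{1}{x^{\alpha+1}}$ for all $\alpha$, and $\frac{1}{x^{\alpha+1}}\prec\frac{1}{x^{\beta+1}}$ implies $\frac{1}{x^{\alpha+\gamma+1}}\prec\frac{1}{x^{\beta+\gamma+1}}$ for all $\alpha,\beta,\gamma$ (such an order is a well-ordering). For $0\neq\eta\in E$, $\mathrm{LT}_\prec(\eta)$ is the $\prec$-largest term occurring in $\eta$ with nonzero coefficient; for a subset $N\subset E$, $\mathrm{LT}_\prec(N)=\{\mathrm{LT}_\prec(\eta)\mid 0\ne\eta\in N\}$. For an $S$-submodule $N\subset E$, $T_1(N)$ denotes the $S$-submodule of $N$ generated by all terms of $E$ that lie in $N$. *)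

theory Defs
  imports Main
begin

(* Variables x_1..x_n are indexed by a finite type 'v (n = CARD('v)).
   An element of E is a coefficient function eta : ('v => nat) => 'k with finite support;
   eta alpha is the coefficient of the term 1/x^(alpha+1).
   An element of S = K[[x_1..x_n]] is an arbitrary coefficient function s : ('v => nat) => 'k;
   s gamma is the coefficient of x^gamma. *)

definition is_E :: "(('v \<Rightarrow> nat) \<Rightarrow> 'k::field) \<Rightarrow> bool" where
  "is_E \<eta> \<longleftrightarrow> finite {\<alpha>. \<eta> \<alpha> \<noteq> 0}"

(* S-action: x^gamma * 1/x^(beta+gamma+1) = 1/x^(beta+1), extended bilinearly;
   the sum is finite since eta has finite support. *)
definition smult_E :: "(('v \<Rightarrow> nat) \<Rightarrow> 'k::field) \<Rightarrow> (('v \<Rightarrow> nat) \<Rightarrow> 'k) \<Rightarrow> (('v \<Rightarrow> nat) \<Rightarrow> 'k)" where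
  "smult_E s \<eta> = (\<lambda>\<beta>. \<Sum>\<gamma>\<in>{\<gamma>. \<eta> (\<lambda>v. \<beta> v + \<gamma> v) \<noteq> 0}. s \<gamma> * \<eta> (\<lambda>v. \<beta> v + \<gamma> v))"

definition submodule :: "(('v \<Rightarrow> nat) \<Rightarrow> 'k::field) set \<Rightarrow> bool" where
  "submodule M \<longleftrightarrow> M \<subseteq> Collect is_E \<and> (\<lambda>_. 0) \<in> M
     \<and> (\<forall>a\<in>M. \<forall>b\<in>M. (\<lambda>\<alpha>. a \<alpha> + b \<alpha>) \<in> M)
     \<and> (\<forall>s. \<forall>a\<in>M. smult_E s a \<in> M)"

definition finite_length :: "(('v \<Rightarrow> nat) \<Rightarrow> 'k::field) set \<Rightarrow> bool" where
  "finite_length N \<longleftrightarrow> (\<exists>m::nat. \<forall>(c::nat \<Rightarrow> (('v \<Rightarrow> nat) \<Rightarrow> 'k) set) k.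
     (\<forall>i\<le>k. submodule (c i) \<and> c i \<subseteq> N) \<and> (\<forall>i<k. c i \<subset> c (Suc i)) \<longrightarrow> k \<le> m)"

definition term_order :: "(('v \<Rightarrow> nat) \<Rightarrow> ('v \<Rightarrow> nat) \<Rightarrow> bool) \<Rightarrow> bool" where
  "term_order ord \<longleftrightarrow>
     (\<forall>a. \<not> ord a a) \<and> (\<forall>a b c. ord a b \<and> ord b c \<longrightarrow> ord a c)
     \<and> (\<forall>a b. a \<noteq> b \<longrightarrow> ord a b \<or> ord b a)
     \<and> (\<forall>a. a \<noteq> (\<lambda>_. 0) \<longrightarrow> ord (\<lambda>_. 0) a)
     \<and> (\<forall>a b g. ord a b \<longrightarrow> ord (\<lambda>v. a v + g v) (\<lambda>v. b v + g v))"

definition le_ord :: "(('v \<Rightarrow> nat) \<Rightarrow> ('v \<Rightarrow> nat) \<Rightarrow> bool) \<Rightarrow> ('v \<Rightarrow> nat) \<Rightarrow> ('v \<Rightarrow> nat) \<Rightarrow> bool" where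
  "le_ord ord a b \<longleftrightarrow> a = b \<or> ord a b"

definition LT :: "(('v \<Rightarrow> nat) \<Rightarrow> ('v \<Rightarrow> nat) \<Rightarrow> bool) \<Rightarrow> (('v \<Rightarrow> nat) \<Rightarrow> 'k::field) \<Rightarrow> ('v \<Rightarrow> nat)" where
  "LT ord \<eta> = (THE \<alpha>. \<eta> \<alpha> \<noteq> 0 \<and> (\<forall>\<beta>. \<eta> \<beta> \<noteq> 0 \<longrightarrow> le_ord ord \<beta> \<alpha>))"

definition LTs :: "(('v \<Rightarrow> nat) \<Rightarrow> ('v \<Rightarrow> nat) \<Rightarrow> bool) \<Rightarrow> (('v \<Rightarrow> nat) \<Rightarrow> 'k::field) set \<Rightarrow> ('v \<Rightarrow> nat) set" where
  "LTs ord M = {LT ord \<eta> | \<eta>. \<eta> \<in> M \<and> \<eta> \<noteq> (\<lambda>_. 0)}"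

definition term_E :: "('v \<Rightarrow> nat) \<Rightarrow> (('v \<Rightarrow> nat) \<Rightarrow> 'k::field)" where
  "term_E \<alpha> = (\<lambda>\<beta>. if \<beta> = \<alpha> then 1 else 0)"

definition gen_sub :: "(('v \<Rightarrow> nat) \<Rightarrow> 'k::field) set \<Rightarrow> (('v \<Rightarrow> nat) \<Rightarrow> 'k) set" where
  "gen_sub A = \<Inter>{M. submodule M \<and> A \<subseteq> M}"

definition T1 :: "(('v \<Rightarrow> nat) \<Rightarrow> 'k::field) set \<Rightarrow> (('v \<Rightarrow> nat) \<Rightarrow> 'k) set" where
  "T1 N = gen_sub {\<eta> \<in> N. \<exists>\<alpha>. \<eta> = term_E \<alpha>}"

definition cyclic :: "(('v \<Rightarrow> nat) \<Rightarrow> 'k::field) \<Rightarrow> (('v \<Rightarrow> nat) \<Rightarrow> 'k) set" where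
  "cyclic \<xi> = {smult_E s \<xi> | s. True}"

definition sum_sub :: "(('v \<Rightarrow> nat) \<Rightarrow> 'k::field) set \<Rightarrow> (('v \<Rightarrow> nat) \<Rightarrow> 'k) set \<Rightarrow> (('v \<Rightarrow> nat) \<Rightarrow> 'k) set" where
  "sum_sub A B = {(\<lambda>\<alpha>. a \<alpha> + b \<alpha>) | a b. a \<in> A \<and> b \<in> B}"

fun Nseq :: "(('v \<Rightarrow> nat) \<Rightarrow> 'k::field) set \<Rightarrow> (nat \<Rightarrow> (('v \<Rightarrow> nat) \<Rightarrow> 'k)) \<Rightarrow> nat \<Rightarrow> (('v \<Rightarrow> nat) \<Rightarrow> 'k) set" where
  "Nseq N \<xi> 0 = T1 N"
| "Nseq N \<xi> (Suc i) = sum_sub (Nseq N \<xi> i) (cyclic (\<xi> (Suc i)))"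

definition valid_step :: "(('v \<Rightarrow> nat) \<Rightarrow> ('v \<Rightarrow> nat) \<Rightarrow> bool) \<Rightarrow> (('v \<Rightarrow> nat) \<Rightarrow> 'k::field) set
     \<Rightarrow> (('v \<Rightarrow> nat) \<Rightarrow> 'k) set \<Rightarrow> (('v \<Rightarrow> nat) \<Rightarrow> 'k) \<Rightarrow> bool" where
  "valid_step ord N M \<zeta> \<longleftrightarrow> \<zeta> \<in> N \<and> \<zeta> \<noteq> (\<lambda>_. 0) \<and> LT ord \<zeta> \<notin> LTs ord M
     \<and> (\<forall>\<eta>\<in>N. \<eta> \<noteq> (\<lambda>_. 0) \<and> LT ord \<eta> \<notin> LTs ord M \<longrightarrow> le_ord ord (LT ord \<zeta>) (LT ord \<eta>))"

definition valid_run :: "(('v \<Rightarrow> nat) \<Rightarrow> ('v \<Rightarrow> nat) \<Rightarrow> bool) \<Rightarrow> (('v \<Rightarrow> nat) \<Rightarrow> 'k::field) set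
     \<Rightarrow> (nat \<Rightarrow> (('v \<Rightarrow> nat) \<Rightarrow> 'k)) \<Rightarrow> bool" where
  "valid_run ord N \<xi> \<longleftrightarrow> (\<forall>i. Nseq N \<xi> i \<noteq> N \<longrightarrow> valid_step ord N (Nseq N \<xi> i) (\<xi> (Suc i)))"

(* M' / M \<cong> K as S-modules (K = S/m, S acting through the constant coefficient):
   an S-linear surjection M' \<rightarrow> K with kernel M *)
definition quot_iso_K :: "(('v \<Rightarrow> nat) \<Rightarrow> 'k::field) set \<Rightarrow> (('v \<Rightarrow> nat) \<Rightarrow> 'k) set \<Rightarrow> bool" where
  "quot_iso_K M M' \<longleftrightarrow> (\<exists>\<phi> :: (('v \<Rightarrow> nat) \<Rightarrow> 'k) \<Rightarrow> 'k.
      (\<forall>a\<in>M'. \<forall>b\<in>M'. \<phi> (\<lambda>\<alpha>. a \<alpha> + b \<alpha>) = \<phi> a + \<phi> b)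
    \<and> (\<forall>s. \<forall>a\<in>M'. \<phi> (smult_E s a) = s (\<lambda>_. 0) * \<phi> a)
    \<and> \<phi> ` M' = UNIV
    \<and> {a\<in>M'. \<phi> a = 0} = M)"

end

theory Submission
  imports Defs "HOL-Library.FuncSet"
begin
lemma to_irrefl: "term_order ord \<Longrightarrow> \<not> ord a a"
  unfolding term_order_def by blast
lemma to_trans: "term_order ord \<Longrightarrow> ord a b \<Longrightarrow> ord b c \<Longrightarrow> ord a c"
  unfolding term_order_def by blast
lemma to_total: "term_order ord \<Longrightarrow> a \<noteq> b \<Longrightarrow> \<not> ord a b \<Longrightarrow> ord b a"
  unfolding term_order_def by blast
lemma le_ord_trans: "term_order ord \<Longrightarrow> le_ord ord a b \<Longrightarrow> le_ord ord b c \<Longrightarrow> le_ord ord a c"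
  unfolding le_ord_def using to_trans by blast
lemma le_ord_antisym: "term_order ord \<Longrightarrow> le_ord ord a b \<Longrightarrow> le_ord ord b a \<Longrightarrow> a = b"
  unfolding le_ord_def using to_trans to_irrefl by blast
lemma le_ord_ord_trans: "term_order ord \<Longrightarrow> le_ord ord a b \<Longrightarrow> ord b c \<Longrightarrow> ord a c"
  unfolding le_ord_def using to_trans by blast
lemma ord_le_ord_trans: "term_order ord \<Longrightarrow> ord a b \<Longrightarrow> le_ord ord b c \<Longrightarrow> ord a c"
  unfolding le_ord_def using to_trans by blast
lemma not_ord_le: "term_order ord \<Longrightarrow> \<not> ord a b \<Longrightarrow> le_ord ord b a"
  unfolding le_ord_def using to_total by blast
lemma le_not_ord: "term_order ord \<Longrightarrow> le_ord ord a b \<Longrightarrow> \<not> ord b a"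
  unfolding le_ord_def using to_trans to_irrefl by blast

lemma ord_max:
  assumes "term_order ord" "finite F" "F \<noteq> {}"
  shows "\<exists>a\<in>F. \<forall>b\<in>F. le_ord ord b a"
  using assms(2,3)
proof (induction F rule: finite_ne_induct)
  case (singleton x) then show ?case by (simp add: le_ord_def)
next
  case (insert x F)
  then obtain a where a: "a\<in>F" "\<forall>b\<in>F. le_ord ord b a" by blast
  show ?case
  proof (cases "ord a x")
    case True
    have "\<forall>b\<in>F. le_ord ord b x"
      using a le_ord_ord_trans[OF assms(1)] True unfolding le_ord_def by blast
    then have "\<forall>b\<in>insert x F. le_ord ord b x" by (simp add: le_ord_def)
    then show ?thesis by blast
  next
    case False
    then have "le_ord ord x a" using assms(1) not_ord_le by blast
    then show ?thesis using a by auto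
  qed
qed

lemma ord_min:
  assumes "term_order ord" "finite F" "F \<noteq> {}"
  shows "\<exists>a\<in>F. \<forall>b\<in>F. le_ord ord a b"
  using assms(2,3)
proof (induction F rule: finite_ne_induct)
  case (singleton x) then show ?case by (simp add: le_ord_def)
next
  case (insert x F)
  then obtain a where a: "a\<in>F" "\<forall>b\<in>F. le_ord ord a b" by blast
  show ?case
  proof (cases "ord x a")
    case True
    have "\<forall>b\<in>F. le_ord ord x b"
      using a ord_le_ord_trans[OF assms(1)] True unfolding le_ord_def by blast
    then have "\<forall>b\<in>insert x F. le_ord ord x b" by (simp add: le_ord_def)
    then show ?thesis by blast
  next
    case False
    then have "le_ord ord a x" using assms(1) not_ord_le by blast
    then show ?thesis using a by auto
  qed
qed

lemma LT_eqI:
  assumes "term_order ord" "\<eta> a \<noteq> 0" "\<forall>\<beta>. \<eta> \<beta> \<noteq> 0 \<longrightarrow> le_ord ord \<beta> a"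
  shows "LT ord \<eta> = a"
  unfolding LT_def
proof (rule the_equality)
  show "\<eta> a \<noteq> 0 \<and> (\<forall>\<beta>. \<eta> \<beta> \<noteq> 0 \<longrightarrow> le_ord ord \<beta> a)" using assms by blast
  fix a' assume "\<eta> a' \<noteq> 0 \<and> (\<forall>\<beta>. \<eta> \<beta> \<noteq> 0 \<longrightarrow> le_ord ord \<beta> a')"
  then show "a' = a" using assms le_ord_antisym by blast
qed

lemma LT_char:
  assumes "term_order ord" "is_E \<eta>" "\<eta> \<noteq> (\<lambda>_. 0)"
  shows "\<eta> (LT ord \<eta>) \<noteq> 0" "\<And>\<beta>. \<eta> \<beta> \<noteq> 0 \<Longrightarrow> le_ord ord \<beta> (LT ord \<eta>)"
proof -
  have f: "finite {\<alpha>. \<eta> \<alpha> \<noteq> 0}" using assms(2) is_E_def by blast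
  have ne: "{\<alpha>. \<eta> \<alpha> \<noteq> 0} \<noteq> {}" using assms(3) by auto
  obtain a where a: "\<eta> a \<noteq> 0" "\<forall>\<beta>. \<eta> \<beta> \<noteq> 0 \<longrightarrow> le_ord ord \<beta> a"
    using ord_max[OF assms(1) f ne] by auto
  have "LT ord \<eta> = a" using LT_eqI[OF assms(1)] a by blast
  then show "\<eta> (LT ord \<eta>) \<noteq> 0" "\<And>\<beta>. \<eta> \<beta> \<noteq> 0 \<Longrightarrow> le_ord ord \<beta> (LT ord \<eta>)" using a by auto
qed

lemma finite_shift:
  assumes "is_E \<eta>"
  shows "finite {\<gamma>. \<eta> (\<lambda>v. \<beta> v + \<gamma> v) \<noteq> 0}"
proof -
  have e: "{\<gamma>. \<eta> (\<lambda>v. \<beta> v + \<gamma> v) \<noteq> 0} = (\<lambda>\<gamma> v. \<beta> v + \<gamma> v) -` {\<alpha>. \<eta> \<alpha> \<noteq> 0}" by auto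
  have "inj (\<lambda>(\<gamma>::'a \<Rightarrow> nat) v. \<beta> v + \<gamma> v)"
    by (auto simp: inj_def fun_eq_iff)
  moreover have "finite {\<alpha>. \<eta> \<alpha> \<noteq> 0}" using assms is_E_def by blast
  ultimately show ?thesis unfolding e by (rule finite_vimageI[rotated])
qed

lemma smult_E_G:
  assumes "finite G" "{\<gamma>. \<eta> (\<lambda>v. \<beta> v + \<gamma> v) \<noteq> 0} \<subseteq> G"
  shows "smult_E s \<eta> \<beta> = (\<Sum>\<gamma>\<in>G. s \<gamma> * \<eta> (\<lambda>v. \<beta> v + \<gamma> v))"
  unfolding smult_E_def
  by (rule sum.mono_neutral_left[OF assms]) auto

lemma smult_E_add:
  assumes "is_E a" "is_E b"
  shows "smult_E s (\<lambda>\<alpha>. a \<alpha> + b \<alpha>) = (\<lambda>\<beta>. smult_E s a \<beta> + smult_E s b \<beta>)"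
proof
  fix \<beta>
  let ?G = "{\<gamma>. a (\<lambda>v. \<beta> v + \<gamma> v) \<noteq> 0} \<union> {\<gamma>. b (\<lambda>v. \<beta> v + \<gamma> v) \<noteq> 0}"
  have f: "finite ?G" using finite_shift assms by blast
  have 1: "smult_E s a \<beta> = (\<Sum>\<gamma>\<in>?G. s \<gamma> * a (\<lambda>v. \<beta> v + \<gamma> v))"
    by (rule smult_E_G[OF f]) auto
  have 2: "smult_E s b \<beta> = (\<Sum>\<gamma>\<in>?G. s \<gamma> * b (\<lambda>v. \<beta> v + \<gamma> v))"
    by (rule smult_E_G[OF f]) auto
  have 3: "smult_E s (\<lambda>\<alpha>. a \<alpha> + b \<alpha>) \<beta> = (\<Sum>\<gamma>\<in>?G. s \<gamma> * (a (\<lambda>v. \<beta> v + \<gamma> v) + b (\<lambda>v. \<beta> v + \<gamma> v)))"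
    by (rule smult_E_G[OF f]) auto
  show "smult_E s (\<lambda>\<alpha>. a \<alpha> + b \<alpha>) \<beta> = smult_E s a \<beta> + smult_E s b \<beta>"
    unfolding 1 2 3 by (simp add: distrib_left sum.distrib)
qed

lemma smult_E_scale:
  "smult_E s (\<lambda>\<alpha>. c * a \<alpha>) = (\<lambda>\<beta>. c * smult_E s a \<beta>)"
proof (cases "c = 0")
  case True then show ?thesis by (simp add: smult_E_def)
next
  case False
  then have "\<And>\<beta>. {\<gamma>. c * a (\<lambda>v. \<beta> v + \<gamma> v) \<noteq> 0} = {\<gamma>. a (\<lambda>v. \<beta> v + \<gamma> v) \<noteq> 0}" by auto
  then show ?thesis unfolding smult_E_def by (simp add: sum_distrib_left mult.left_commute)
qed

lemma smult_E_sadd: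
  "smult_E (\<lambda>\<gamma>. s1 \<gamma> + s2 \<gamma>) \<eta> = (\<lambda>\<beta>. smult_E s1 \<eta> \<beta> + smult_E s2 \<eta> \<beta>)"
  unfolding smult_E_def by (simp add: sum.distrib distrib_right)

lemma smult_E_delta:
  assumes "is_E \<eta>"
  shows "smult_E (\<lambda>\<gamma>. if \<gamma> = (\<lambda>_. 0) then c else 0) \<eta> = (\<lambda>\<alpha>. c * \<eta> \<alpha>)"
proof
  fix \<beta>
  have f: "finite {\<gamma>. \<eta> (\<lambda>v. \<beta> v + \<gamma> v) \<noteq> 0}" using finite_shift assms by blast
  have "smult_E (\<lambda>\<gamma>. if \<gamma> = (\<lambda>_. 0) then c else 0) \<eta> \<beta>
     = (\<Sum>\<gamma>\<in>{\<gamma>. \<eta> (\<lambda>v. \<beta> v + \<gamma> v) \<noteq> 0}. if \<gamma> = (\<lambda>_. 0) then c * \<eta> \<beta> else 0)"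
    unfolding smult_E_def by (rule sum.cong) auto
  also have "\<dots> = c * \<eta> \<beta>" using f by (simp add: sum.delta')
  finally show "smult_E (\<lambda>\<gamma>. if \<gamma> = (\<lambda>_. 0) then c else 0) \<eta> \<beta> = c * \<eta> \<beta>" .
qed

lemma smult_E_nz:
  assumes "smult_E s \<eta> \<beta> \<noteq> 0"
  shows "\<exists>\<gamma>. s \<gamma> \<noteq> 0 \<and> \<eta> (\<lambda>v. \<beta> v + \<gamma> v) \<noteq> 0"
  using sum.not_neutral_contains_not_neutral[OF assms[unfolded smult_E_def]] by auto

lemma sub_E: "submodule M \<Longrightarrow> a \<in> M \<Longrightarrow> is_E a"
  unfolding submodule_def by blast
lemma sub_zero: "submodule M \<Longrightarrow> (\<lambda>_. 0) \<in> M"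
  unfolding submodule_def by blast
lemma sub_add: "submodule M \<Longrightarrow> a \<in> M \<Longrightarrow> b \<in> M \<Longrightarrow> (\<lambda>\<alpha>. a \<alpha> + b \<alpha>) \<in> M"
  unfolding submodule_def by blast
lemma sub_smult: "submodule M \<Longrightarrow> a \<in> M \<Longrightarrow> smult_E s a \<in> M"
  unfolding submodule_def by blast
lemma sub_scale: "submodule M \<Longrightarrow> a \<in> M \<Longrightarrow> (\<lambda>\<alpha>. c * a \<alpha>) \<in> M"
proof -
  assume M: "submodule M" and a: "a \<in> M"
  have "smult_E (\<lambda>\<gamma>. if \<gamma> = (\<lambda>_. 0) then c else 0) a \<in> M" by (rule sub_smult[OF M a])
  then show ?thesis using smult_E_delta[OF sub_E[OF M a]] by simp
qed
lemma sub_lin: "submodule M \<Longrightarrow> a \<in> M \<Longrightarrow> b \<in> M \<Longrightarrow> (\<lambda>\<alpha>. a \<alpha> + c * b \<alpha>) \<in> M"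
  using sub_add sub_scale by blast
lemma sub_diff: "submodule M \<Longrightarrow> a \<in> M \<Longrightarrow> b \<in> M \<Longrightarrow> (\<lambda>\<alpha>. a \<alpha> - c * b \<alpha>) \<in> M"
  using sub_lin[of M a b "-c"] by simp

definition Nd :: "(('v \<Rightarrow> nat) \<Rightarrow> 'k::field) set \<Rightarrow> nat \<Rightarrow> (('v \<Rightarrow> nat) \<Rightarrow> 'k) set" where
  "Nd N d = {\<eta>\<in>N. \<forall>\<alpha>. \<eta> \<alpha> \<noteq> 0 \<longrightarrow> (\<forall>v. \<alpha> v \<le> d)}"

lemma Nd_sub: assumes "submodule N" shows "submodule (Nd N d)"
proof -
  have "\<forall>s. \<forall>a\<in>Nd N d. smult_E s a \<in> Nd N d"
  proof (intro allI ballI)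
    fix s a assume a: "a \<in> Nd N d"
    have "\<forall>\<beta>. smult_E s a \<beta> \<noteq> 0 \<longrightarrow> (\<forall>v. \<beta> v \<le> d)"
    proof (intro allI impI)
      fix \<beta> v assume "smult_E s a \<beta> \<noteq> 0"
      then obtain \<gamma> where "a (\<lambda>v. \<beta> v + \<gamma> v) \<noteq> 0" using smult_E_nz by blast
      then have "\<beta> v + \<gamma> v \<le> d" using a unfolding Nd_def by auto
      then show "\<beta> v \<le> d" by simp
    qed
    then show "smult_E s a \<in> Nd N d" using a sub_smult[OF assms] unfolding Nd_def by auto
  qed
  moreover have "\<forall>a\<in>Nd N d. \<forall>b\<in>Nd N d. (\<lambda>\<alpha>. a \<alpha> + b \<alpha>) \<in> Nd N d"
  proof (intro ballI)
    fix a b assume a: "a \<in> Nd N d" and b: "b \<in> Nd N d"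
    have "(\<lambda>\<alpha>. a \<alpha> + b \<alpha>) \<in> N" using a b sub_add[OF assms] unfolding Nd_def by blast
    moreover have "\<forall>\<alpha>. a \<alpha> + b \<alpha> \<noteq> 0 \<longrightarrow> (\<forall>v. \<alpha> v \<le> d)"
    proof (intro allI impI)
      fix \<alpha> v assume "a \<alpha> + b \<alpha> \<noteq> 0"
      then have "a \<alpha> \<noteq> 0 \<or> b \<alpha> \<noteq> 0" by auto
      then show "\<alpha> v \<le> d" using a b unfolding Nd_def by blast
    qed
    ultimately show "(\<lambda>\<alpha>. a \<alpha> + b \<alpha>) \<in> Nd N d" unfolding Nd_def by blast
  qed
  moreover have "(\<lambda>_. 0) \<in> Nd N d" using sub_zero[OF assms] unfolding Nd_def by auto
  moreover have "Nd N d \<subseteq> Collect is_E" using sub_E[OF assms] unfolding Nd_def by auto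
  ultimately show ?thesis unfolding submodule_def by blast
qed

lemma Nd_mono: "d \<le> d' \<Longrightarrow> Nd N d \<subseteq> Nd N d'"
  unfolding Nd_def using le_trans by blast

lemma Nd_le: "Nd N d \<subseteq> N" unfolding Nd_def by auto

lemma in_Nd:
  fixes N :: "(('v::finite \<Rightarrow> nat) \<Rightarrow> 'k::field) set"
  assumes "submodule N" "\<eta> \<in> N"
  shows "\<exists>d. \<eta> \<in> Nd N (d::nat)"
proof -
  let ?F = "(\<lambda>(\<alpha>, v::'v::finite). \<alpha> v) ` ({\<alpha>. \<eta> \<alpha> \<noteq> 0} \<times> UNIV)"
  have "finite {\<alpha>. \<eta> \<alpha> \<noteq> 0}" using sub_E[OF assms] is_E_def by blast
  then have f: "finite ?F" by simp
  have "\<forall>\<alpha>. \<eta> \<alpha> \<noteq> 0 \<longrightarrow> (\<forall>v. \<alpha> v \<le> Max ?F)"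
  proof (intro allI impI)
    fix \<alpha> v assume "\<eta> \<alpha> \<noteq> 0"
    then have "\<alpha> v \<in> ?F" by force
    then show "\<alpha> v \<le> Max ?F" using Max_ge[OF f] by blast
  qed
  then show ?thesis using assms(2) unfolding Nd_def by blast
qed

lemma finite_bounded_funs: "finite {\<alpha>::'v::finite \<Rightarrow> nat. \<forall>v. \<alpha> v \<le> D}"
proof -
  have "{\<alpha>::'v \<Rightarrow> nat. \<forall>v. \<alpha> v \<le> D} = PiE UNIV (\<lambda>_. {..D})"
    by (auto simp: PiE_def Pi_def extensional_def)
  then show ?thesis by (simp add: finite_PiE)
qed

lemma finite_supp:
  fixes N :: "(('v::finite \<Rightarrow> nat) \<Rightarrow> 'k::field) set"
  assumes "submodule N" "finite_length N"
  shows "finite {\<alpha>. \<exists>\<eta>\<in>N. \<eta> \<alpha> \<noteq> 0}"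
proof -
  obtain m where m: "\<forall>(c::nat \<Rightarrow> (('v \<Rightarrow> nat) \<Rightarrow> 'k) set) k.
     (\<forall>i\<le>k. submodule (c i) \<and> c i \<subseteq> N) \<and> (\<forall>i<k. c i \<subset> c (Suc i)) \<longrightarrow> k \<le> m"
    using assms(2) unfolding finite_length_def by blast
  have "\<exists>D. Nd N D = N"
  proof (rule ccontr)
    assume "\<nexists>D. Nd N D = N"
    then have step: "\<forall>d. \<exists>d'. Nd N d \<subset> Nd N d'"
    proof (intro allI)
      fix d assume ne: "\<nexists>D. Nd N D = N"
      then obtain \<eta> where \<eta>: "\<eta> \<in> N" "\<eta> \<notin> Nd N d" using Nd_le by blast
      obtain d0 where "\<eta> \<in> Nd N d0" using in_Nd[OF assms(1) \<eta>(1)] by blast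
      then have "\<eta> \<in> Nd N (max d d0)" using Nd_mono[of d0 "max d d0" N] by auto
      moreover have "Nd N d \<subseteq> Nd N (max d d0)" by (rule Nd_mono) simp
      ultimately show "\<exists>d'. Nd N d \<subset> Nd N d'" using \<eta>(2) by blast
    qed
    have chain: "\<exists>c::nat \<Rightarrow> (('v \<Rightarrow> nat) \<Rightarrow> 'k) set. (\<forall>i\<le>k. \<exists>d. c i = Nd N d) \<and> (\<forall>i<k. c i \<subset> c (Suc i))" for k
    proof (induction k)
      case 0 show ?case by (rule exI[of _ "\<lambda>_. Nd N 0"]) auto
    next
      case (Suc k)
      then obtain c where c: "\<forall>i\<le>k. \<exists>d. c i = Nd N d" "\<forall>i<k. c i \<subset> c (Suc i)" by blast
      obtain d where d: "c k = Nd N d" using c(1) by blast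
      obtain d' where d': "Nd N d \<subset> Nd N d'" using step by blast
      let ?c = "c(Suc k := Nd N d')"
      have "\<forall>i\<le>Suc k. \<exists>d. ?c i = Nd N d" using c(1) by (auto simp: le_Suc_eq)
      moreover have "\<forall>i<Suc k. ?c i \<subset> ?c (Suc i)" using c(2) d d' by (auto simp: less_Suc_eq)
      ultimately show ?case by blast
    qed
    obtain c where c: "\<forall>i\<le>Suc m. \<exists>d. c i = Nd N d" "\<forall>i<Suc m. c i \<subset> c (Suc i)"
      using chain by blast
    have "\<forall>i\<le>Suc m. submodule (c i) \<and> c i \<subseteq> N"
    proof (intro allI impI)
      fix i assume "i \<le> Suc m"
      then obtain d where "c i = Nd N d" using c(1) by blast
      then show "submodule (c i) \<and> c i \<subseteq> N" using Nd_sub[OF assms(1)] Nd_le by simp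
    qed
    then have "Suc m \<le> m" using m c(2) by blast
    then show False by simp
  qed
  then obtain D where D: "Nd N D = N" by blast
  have "{\<alpha>. \<exists>\<eta>\<in>N. \<eta> \<alpha> \<noteq> 0} \<subseteq> {\<alpha>. \<forall>v. \<alpha> v \<le> D}"
    using D unfolding Nd_def by blast
  then show ?thesis using finite_bounded_funs finite_subset by blast
qed

lemma sub_minus: "submodule M \<Longrightarrow> a \<in> M \<Longrightarrow> b \<in> M \<Longrightarrow> (\<lambda>\<alpha>. a \<alpha> - b \<alpha>) \<in> M"
  using sub_diff[of M a b 1] by simp

lemma to_zero: "term_order ord \<Longrightarrow> a \<noteq> (\<lambda>_. 0) \<Longrightarrow> ord (\<lambda>_. 0) a"
  unfolding term_order_def by blast
lemma to_add: "term_order ord \<Longrightarrow> ord a b \<Longrightarrow> ord (\<lambda>v. a v + g v) (\<lambda>v. b v + g v)"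
  unfolding term_order_def by blast
lemma sum_sub_I: "a \<in> A \<Longrightarrow> b \<in> B \<Longrightarrow> x = (\<lambda>\<alpha>. a \<alpha> + b \<alpha>) \<Longrightarrow> x \<in> sum_sub A B"
  unfolding sum_sub_def by blast

lemma cancel:
  assumes to: "term_order ord" and aE: "is_E a" and bE: "is_E b" and a0: "a \<noteq> (\<lambda>_. 0)" and b0: "b \<noteq> (\<lambda>_. 0)"
    and La: "LT ord a = L" and Lb: "LT ord b = L"
  shows "(\<lambda>\<alpha>. a \<alpha> - (a L / b L) * b \<alpha>) L = 0"
    and "(\<lambda>\<alpha>. a \<alpha> - (a L / b L) * b \<alpha>) \<noteq> (\<lambda>_. 0) \<Longrightarrow> ord (LT ord (\<lambda>\<alpha>. a \<alpha> - (a L / b L) * b \<alpha>)) L"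
proof -
  let ?e = "\<lambda>\<alpha>. a \<alpha> - (a L / b L) * b \<alpha>"
  have bL: "b L \<noteq> 0" using LT_char(1)[OF to bE b0] Lb by simp
  then show "?e L = 0" by simp
  assume e0: "?e \<noteq> (\<lambda>_. 0)"
  have "{\<alpha>. ?e \<alpha> \<noteq> 0} \<subseteq> {\<alpha>. a \<alpha> \<noteq> 0} \<union> {\<alpha>. b \<alpha> \<noteq> 0}" by auto
  then have eE: "is_E ?e" using aE bE unfolding is_E_def by (meson finite_Un finite_subset)
  let ?L' = "LT ord ?e"
  have "?e ?L' \<noteq> 0" using LT_char(1)[OF to eE e0] .
  then have "a ?L' \<noteq> 0 \<or> b ?L' \<noteq> 0" by auto
  then have "le_ord ord ?L' L" using LT_char(2)[OF to aE a0] LT_char(2)[OF to bE b0] La Lb by auto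
  moreover have "?L' \<noteq> L" using \<open>?e ?L' \<noteq> 0\<close> bL by auto
  ultimately show "ord ?L' L" unfolding le_ord_def by blast
qed

locale sset =
  fixes ord :: "('v \<Rightarrow> nat) \<Rightarrow> ('v \<Rightarrow> nat) \<Rightarrow> bool"
    and N M :: "(('v \<Rightarrow> nat) \<Rightarrow> 'k::field) set" and S :: "('v \<Rightarrow> nat) set"
  assumes to: "term_order ord" and subN: "submodule N" and subM: "submodule M" and MN: "M \<subseteq> N"
    and finS: "finite S" and hS: "\<And>\<eta> \<alpha>. \<eta> \<in> N \<Longrightarrow> \<eta> \<alpha> \<noteq> 0 \<Longrightarrow> \<alpha> \<in> S"
begin

lemma LTs_E: "x \<in> LTs ord M \<Longrightarrow> \<exists>m. m \<in> M \<and> m \<noteq> (\<lambda>_. 0) \<and> LT ord m = x"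
  unfolding LTs_def by auto
lemma LTs_I: "m \<in> M \<Longrightarrow> m \<noteq> (\<lambda>_. 0) \<Longrightarrow> LT ord m \<in> LTs ord M"
  unfolding LTs_def by auto

lemma NE: "\<eta> \<in> N \<Longrightarrow> is_E \<eta>" using sub_E subN by blast
lemma ME: "\<eta> \<in> M \<Longrightarrow> is_E \<eta>" using sub_E subM by blast

lemma LT_S: "\<eta> \<in> N \<Longrightarrow> \<eta> \<noteq> (\<lambda>_. 0) \<Longrightarrow> LT ord \<eta> \<in> S"
  using hS LT_char(1)[OF to NE] by blast

lemma reduce:
  assumes D_down: "\<And>a b. a \<in> D \<Longrightarrow> ord b a \<Longrightarrow> b \<in> D"
    and D_lt: "\<And>\<eta>. \<eta> \<in> N \<Longrightarrow> \<eta> \<noteq> (\<lambda>_. 0) \<Longrightarrow> LT ord \<eta> \<in> D \<Longrightarrow> LT ord \<eta> \<in> LTs ord M"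
  shows "\<eta> \<in> N \<Longrightarrow> (\<eta> \<noteq> (\<lambda>_. 0) \<Longrightarrow> LT ord \<eta> \<in> D) \<Longrightarrow> \<eta> \<in> M"
proof (induction "card {\<beta>\<in>S. ord \<beta> (LT ord \<eta>)}" arbitrary: \<eta> rule: less_induct)
  case less
  show ?case
  proof (cases "\<eta> = (\<lambda>_. 0)")
    case True then show ?thesis using sub_zero subM by simp
  next
    case False
    let ?L = "LT ord \<eta>"
    have LD: "?L \<in> D" using less False by blast
    have "?L \<in> LTs ord M" using D_lt less(2) False LD by blast
    then obtain m where m: "m \<in> M" "m \<noteq> (\<lambda>_. 0)" "LT ord m = ?L" using LTs_E by blast
    define \<eta>' where "\<eta>' = (\<lambda>\<alpha>. \<eta> \<alpha> - (\<eta> ?L / m ?L) * m \<alpha>)"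
    have \<eta>'N: "\<eta>' \<in> N" unfolding \<eta>'_def using sub_diff[OF subN less(2)] m(1) MN by blast
    have can: "\<eta>' ?L = 0" "\<eta>' \<noteq> (\<lambda>_. 0) \<Longrightarrow> ord (LT ord \<eta>') ?L"
      using cancel[OF to NE[OF less(2)] ME[OF m(1)] False m(2) refl m(3)] unfolding \<eta>'_def by auto
    have "\<eta>' \<in> M"
    proof (cases "\<eta>' = (\<lambda>_. 0)")
      case True then show ?thesis using sub_zero subM by simp
    next
      case F2: False
      have o: "ord (LT ord \<eta>') ?L" using can F2 by blast
      have "LT ord \<eta>' \<in> D" using D_down LD o by blast
      have "LT ord \<eta>' \<in> S" using LT_S \<eta>'N F2 by blast
      have "{\<beta>\<in>S. ord \<beta> (LT ord \<eta>')} \<subset> {\<beta>\<in>S. ord \<beta> ?L}"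
      proof
        show "{\<beta>\<in>S. ord \<beta> (LT ord \<eta>')} \<subseteq> {\<beta>\<in>S. ord \<beta> ?L}"
        proof
          fix x assume "x \<in> {\<beta>\<in>S. ord \<beta> (LT ord \<eta>')}"
          then show "x \<in> {\<beta>\<in>S. ord \<beta> ?L}" using to_trans[OF to, of x "LT ord \<eta>'" ?L] o by simp
        qed
        show "{\<beta>\<in>S. ord \<beta> (LT ord \<eta>')} \<noteq> {\<beta>\<in>S. ord \<beta> ?L}"
          using \<open>LT ord \<eta>' \<in> S\<close> o to_irrefl[OF to] by blast
      qed
      then have "card {\<beta>\<in>S. ord \<beta> (LT ord \<eta>')} < card {\<beta>\<in>S. ord \<beta> ?L}"
        by (rule psubset_card_mono[rotated]) (simp add: finS)
      then show ?thesis using less.hyps \<eta>'N \<open>LT ord \<eta>' \<in> D\<close> by blast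
    qed
    then have "(\<lambda>\<alpha>. \<eta>' \<alpha> + (\<eta> ?L / m ?L) * m \<alpha>) \<in> M" using sub_lin subM m(1) by blast
    moreover have "(\<lambda>\<alpha>. \<eta>' \<alpha> + (\<eta> ?L / m ?L) * m \<alpha>) = \<eta>" by (simp add: \<eta>'_def)
    ultimately show ?thesis by simp
  qed
qed

lemma valid_D: "valid_step ord N M \<xi> \<Longrightarrow> \<xi> \<in> N"
  "valid_step ord N M \<xi> \<Longrightarrow> \<xi> \<noteq> (\<lambda>_. 0)"
  "valid_step ord N M \<xi> \<Longrightarrow> LT ord \<xi> \<notin> LTs ord M"
  unfolding valid_step_def by blast+
lemma valid_min: "valid_step ord N M \<xi> \<Longrightarrow> \<eta> \<in> N \<Longrightarrow> \<eta> \<noteq> (\<lambda>_. 0) \<Longrightarrow> LT ord \<eta> \<notin> LTs ord M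
   \<Longrightarrow> le_ord ord (LT ord \<xi>) (LT ord \<eta>)"
  unfolding valid_step_def by blast

lemma valid_not_in:
  assumes v: "valid_step ord N M \<xi>"
  shows "\<xi> \<notin> M"
proof
  assume "\<xi> \<in> M"
  then have "LT ord \<xi> \<in> LTs ord M" using LTs_I valid_D(2)[OF v] by blast
  then show False using valid_D(3)[OF v] by blast
qed

lemma below_in_M:
  assumes v: "valid_step ord N M \<xi>" and \<eta>N: "\<eta> \<in> N"
    and lt: "\<eta> \<noteq> (\<lambda>_. 0) \<Longrightarrow> ord (LT ord \<eta>) (LT ord \<xi>)"
  shows "\<eta> \<in> M"
proof (rule reduce[of "{\<beta>. ord \<beta> (LT ord \<xi>)}"])
  fix a b assume "a \<in> {\<beta>. ord \<beta> (LT ord \<xi>)}" "ord b a"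
  then show "b \<in> {\<beta>. ord \<beta> (LT ord \<xi>)}" using to_trans[OF to, of b a "LT ord \<xi>"] by simp
next
  fix \<eta> assume h: "\<eta> \<in> N" "\<eta> \<noteq> (\<lambda>_. 0)" "LT ord \<eta> \<in> {\<beta>. ord \<beta> (LT ord \<xi>)}"
  show "LT ord \<eta> \<in> LTs ord M"
  proof (rule ccontr)
    assume "LT ord \<eta> \<notin> LTs ord M"
    then have "le_ord ord (LT ord \<xi>) (LT ord \<eta>)" using valid_min[OF v h(1,2)] by blast
    then show False using le_not_ord[OF to] h(3) by blast
  qed
next
  show "\<eta> \<in> N" by fact
next
  show "\<eta> \<noteq> (\<lambda>_. 0) \<Longrightarrow> LT ord \<eta> \<in> {\<beta>. ord \<beta> (LT ord \<xi>)}" using lt by blast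
qed

lemma smult_xi:
  assumes v: "valid_step ord N M \<xi>"
  shows "\<exists>m\<in>M. smult_E s \<xi> = (\<lambda>\<beta>. m \<beta> + s (\<lambda>_. 0) * \<xi> \<beta>)"
proof -
  define s' where "s' = (\<lambda>\<gamma>. if \<gamma> = (\<lambda>_. 0::nat) then 0 else s \<gamma>)"
  have \<xi>N: "\<xi> \<in> N" and \<xi>0: "\<xi> \<noteq> (\<lambda>_. 0)" using v unfolding valid_step_def by auto
  have \<xi>E: "is_E \<xi>" using NE \<xi>N by blast
  have "s = (\<lambda>\<gamma>. s' \<gamma> + (if \<gamma> = (\<lambda>_. 0) then s (\<lambda>_. 0) else 0))"
    by (rule ext) (simp add: s'_def)
  then have split: "smult_E s \<xi> = (\<lambda>\<beta>. smult_E s' \<xi> \<beta> + s (\<lambda>_. 0) * \<xi> \<beta>)"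
    using smult_E_sadd[of s' "\<lambda>\<gamma>. if \<gamma> = (\<lambda>_. 0) then s (\<lambda>_. 0) else 0" \<xi>] smult_E_delta[OF \<xi>E, of "s (\<lambda>_. 0)"]
    by simp
  let ?\<zeta> = "smult_E s' \<xi>"
  have \<zeta>N: "?\<zeta> \<in> N" using sub_smult[OF subN \<xi>N] .
  have "?\<zeta> \<in> M"
  proof (rule below_in_M[OF v \<zeta>N])
    assume "?\<zeta> \<noteq> (\<lambda>_. 0)"
    then have "?\<zeta> (LT ord ?\<zeta>) \<noteq> 0" using LT_char(1)[OF to NE[OF \<zeta>N]] by blast
    then obtain \<gamma> where \<gamma>: "s' \<gamma> \<noteq> 0" "\<xi> (\<lambda>v. LT ord ?\<zeta> v + \<gamma> v) \<noteq> 0" using smult_E_nz by blast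
    let ?L' = "LT ord ?\<zeta>"
    have \<gamma>0: "\<gamma> \<noteq> (\<lambda>_. 0)" using \<gamma>(1) by (auto simp: s'_def)
    have "ord (\<lambda>_. 0) \<gamma>" using to_zero[OF to \<gamma>0] .
    then have "ord (\<lambda>v. (\<lambda>_. 0) v + ?L' v) (\<lambda>v. \<gamma> v + ?L' v)" by (rule to_add[OF to])
    then have o1: "ord ?L' (\<lambda>v. ?L' v + \<gamma> v)" by (simp add: add.commute)
    have le: "le_ord ord (\<lambda>v. ?L' v + \<gamma> v) (LT ord \<xi>)" by (rule LT_char(2)[OF to \<xi>E \<xi>0]) (rule \<gamma>(2))
    show "ord ?L' (LT ord \<xi>)" by (rule ord_le_ord_trans[OF to o1 le])
  qed
  then show ?thesis using split by blast
qed

definition Mx :: "(('v \<Rightarrow> nat) \<Rightarrow> 'k) \<Rightarrow> (('v \<Rightarrow> nat) \<Rightarrow> 'k) set" where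
  "Mx \<xi> = {\<lambda>\<alpha>. m \<alpha> + c * \<xi> \<alpha> | m c. m \<in> M}"

lemma Mx_I: "m \<in> M \<Longrightarrow> x = (\<lambda>\<alpha>. m \<alpha> + c * \<xi> \<alpha>) \<Longrightarrow> x \<in> Mx \<xi>"
  unfolding Mx_def by blast
lemma Mx_E: "x \<in> Mx \<xi> \<Longrightarrow> \<exists>m c. m \<in> M \<and> x = (\<lambda>\<alpha>. m \<alpha> + c * \<xi> \<alpha>)"
  unfolding Mx_def by blast

lemma Mx_eq:
  assumes v: "valid_step ord N M \<xi>"
  shows "sum_sub M (cyclic \<xi>) = Mx \<xi>"
proof
  have \<xi>E: "is_E \<xi>" using v NE unfolding valid_step_def by blast
  show "sum_sub M (cyclic \<xi>) \<subseteq> Mx \<xi>"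
  proof
    fix x assume "x \<in> sum_sub M (cyclic \<xi>)"
    then obtain a s where a: "a \<in> M" and x: "x = (\<lambda>\<alpha>. a \<alpha> + smult_E s \<xi> \<alpha>)"
      unfolding sum_sub_def cyclic_def by blast
    obtain m where m: "m \<in> M" "smult_E s \<xi> = (\<lambda>\<beta>. m \<beta> + s (\<lambda>_. 0) * \<xi> \<beta>)" using smult_xi[OF v] by blast
    have "x = (\<lambda>\<alpha>. (\<lambda>\<alpha>. a \<alpha> + m \<alpha>) \<alpha> + s (\<lambda>_. 0) * \<xi> \<alpha>)" unfolding x m(2) by (simp add: add.assoc)
    moreover have "(\<lambda>\<alpha>. a \<alpha> + m \<alpha>) \<in> M" using sub_add[OF subM a m(1)] .
    ultimately show "x \<in> Mx \<xi>" by (rule Mx_I[rotated])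
  qed
  show "Mx \<xi> \<subseteq> sum_sub M (cyclic \<xi>)"
  proof
    fix x assume "x \<in> Mx \<xi>"
    then obtain m c where m: "m \<in> M" and x: "x = (\<lambda>\<alpha>. m \<alpha> + c * \<xi> \<alpha>)" using Mx_E by blast
    have "smult_E (\<lambda>\<gamma>. if \<gamma> = (\<lambda>_. 0) then c else 0) \<xi> \<in> cyclic \<xi>" unfolding cyclic_def by blast
    then have "(\<lambda>\<alpha>. c * \<xi> \<alpha>) \<in> cyclic \<xi>" using smult_E_delta[OF \<xi>E] by simp
    then show "x \<in> sum_sub M (cyclic \<xi>)" using sum_sub_I m x by blast
  qed
qed

end

context sset begin

lemma Mx_N: assumes v: "valid_step ord N M \<xi>" and x: "x \<in> Mx \<xi>" shows "x \<in> N"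
proof -
  obtain m c where m: "m \<in> M" "x = (\<lambda>\<alpha>. m \<alpha> + c * \<xi> \<alpha>)" using Mx_E[OF x] by blast
  show ?thesis unfolding m(2) using sub_lin[OF subN] m(1) MN valid_D(1)[OF v] by blast
qed

lemma smult_Mx:
  assumes v: "valid_step ord N M \<xi>" and m: "m \<in> M"
  shows "\<exists>m''\<in>M. smult_E s (\<lambda>\<alpha>. m \<alpha> + c * \<xi> \<alpha>) = (\<lambda>\<beta>. m'' \<beta> + (c * s (\<lambda>_. 0)) * \<xi> \<beta>)"
proof -
  have \<xi>N: "\<xi> \<in> N" using valid_D(1)[OF v] .
  have cE: "is_E (\<lambda>\<alpha>. c * \<xi> \<alpha>)" using NE sub_scale[OF subN \<xi>N] by blast
  obtain m' where m': "m' \<in> M" "smult_E s \<xi> = (\<lambda>\<beta>. m' \<beta> + s (\<lambda>_. 0) * \<xi> \<beta>)" using smult_xi[OF v] by blast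
  have "smult_E s (\<lambda>\<alpha>. m \<alpha> + c * \<xi> \<alpha>) = (\<lambda>\<beta>. smult_E s m \<beta> + c * smult_E s \<xi> \<beta>)"
    using smult_E_add[OF ME[OF m] cE, of s] smult_E_scale[of s c \<xi>] by simp
  also have "\<dots> = (\<lambda>\<beta>. (\<lambda>\<beta>. smult_E s m \<beta> + c * m' \<beta>) \<beta> + (c * s (\<lambda>_. 0)) * \<xi> \<beta>)"
    unfolding m'(2) by (rule ext) (simp add: algebra_simps)
  finally have eq: "smult_E s (\<lambda>\<alpha>. m \<alpha> + c * \<xi> \<alpha>) = (\<lambda>\<beta>. smult_E s m \<beta> + c * m' \<beta> + (c * s (\<lambda>_. 0)) * \<xi> \<beta>)" .
  have mem: "(\<lambda>\<beta>. smult_E s m \<beta> + c * m' \<beta>) \<in> M" by (rule sub_lin[OF subM sub_smult[OF subM m] m'(1)])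
  show ?thesis using eq mem by (intro bexI[where x="\<lambda>\<beta>. smult_E s m \<beta> + c * m' \<beta>"]) simp_all
qed

definition phi :: "(('v \<Rightarrow> nat) \<Rightarrow> 'k) \<Rightarrow> (('v \<Rightarrow> nat) \<Rightarrow> 'k) \<Rightarrow> 'k" where
  "phi \<xi> a = (THE c. (\<lambda>\<alpha>. a \<alpha> - c * \<xi> \<alpha>) \<in> M)"

lemma phi_eq:
  assumes v: "valid_step ord N M \<xi>" and m: "m \<in> M"
  shows "phi \<xi> (\<lambda>\<alpha>. m \<alpha> + c * \<xi> \<alpha>) = c"
  unfolding phi_def
proof (rule the_equality)
  show "(\<lambda>\<alpha>. (\<lambda>\<alpha>. m \<alpha> + c * \<xi> \<alpha>) \<alpha> - c * \<xi> \<alpha>) \<in> M" using m by simp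
  fix d assume H: "(\<lambda>\<alpha>. (\<lambda>\<alpha>. m \<alpha> + c * \<xi> \<alpha>) \<alpha> - d * \<xi> \<alpha>) \<in> M"
  show "d = c"
  proof (rule ccontr)
    assume ne: "d \<noteq> c"
    then have ne2: "c - d \<noteq> 0" by simp
    have "(\<lambda>\<alpha>. (\<lambda>\<alpha>. m \<alpha> + c * \<xi> \<alpha> - d * \<xi> \<alpha>) \<alpha> - m \<alpha>) \<in> M" by (rule sub_minus[OF subM H m])
    then have "(\<lambda>\<alpha>. inverse (c - d) * (m \<alpha> + c * \<xi> \<alpha> - d * \<xi> \<alpha> - m \<alpha>)) \<in> M" using sub_scale[OF subM] by blast
    moreover have "(\<lambda>\<alpha>. inverse (c - d) * (m \<alpha> + c * \<xi> \<alpha> - d * \<xi> \<alpha> - m \<alpha>)) = \<xi>"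
    proof
      fix \<alpha>
      have "m \<alpha> + c * \<xi> \<alpha> - d * \<xi> \<alpha> - m \<alpha> = (c - d) * \<xi> \<alpha>" by (simp add: algebra_simps)
      then show "inverse (c - d) * (m \<alpha> + c * \<xi> \<alpha> - d * \<xi> \<alpha> - m \<alpha>) = \<xi> \<alpha>" using ne2 by simp
    qed
    ultimately show False using valid_not_in[OF v] by simp
  qed
qed

lemma Mx_props:
  assumes v: "valid_step ord N M \<xi>"
  shows "submodule (Mx \<xi>)" "Mx \<xi> \<subseteq> N" "M \<subset> Mx \<xi>" "quot_iso_K M (Mx \<xi>)" "\<xi> \<in> Mx \<xi>"
proof -
  have \<xi>N: "\<xi> \<in> N" using valid_D(1)[OF v] .
  show MxN: "Mx \<xi> \<subseteq> N" using Mx_N[OF v] by blast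
  have MMx: "M \<subseteq> Mx \<xi>"
  proof
    fix m assume "m \<in> M" then show "m \<in> Mx \<xi>" by (rule Mx_I[of _ _ 0]) simp
  qed
  show \<xi>Mx: "\<xi> \<in> Mx \<xi>" by (rule Mx_I[of "\<lambda>_. 0" _ 1]) (simp_all add: sub_zero[OF subM])
  show "M \<subset> Mx \<xi>" using MMx \<xi>Mx valid_not_in[OF v] by blast
  have add: "(\<lambda>\<alpha>. a \<alpha> + b \<alpha>) \<in> Mx \<xi> \<and> phi \<xi> (\<lambda>\<alpha>. a \<alpha> + b \<alpha>) = phi \<xi> a + phi \<xi> b"
    if a: "a \<in> Mx \<xi>" and b: "b \<in> Mx \<xi>" for a b
  proof -
    obtain m1 c1 where 1: "m1 \<in> M" "a = (\<lambda>\<alpha>. m1 \<alpha> + c1 * \<xi> \<alpha>)" using Mx_E[OF a] by blast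
    obtain m2 c2 where 2: "m2 \<in> M" "b = (\<lambda>\<alpha>. m2 \<alpha> + c2 * \<xi> \<alpha>)" using Mx_E[OF b] by blast
    have e: "(\<lambda>\<alpha>. a \<alpha> + b \<alpha>) = (\<lambda>\<alpha>. (\<lambda>\<alpha>. m1 \<alpha> + m2 \<alpha>) \<alpha> + (c1 + c2) * \<xi> \<alpha>)"
      unfolding 1(2) 2(2) by (rule ext) (simp add: algebra_simps)
    have m12: "(\<lambda>\<alpha>. m1 \<alpha> + m2 \<alpha>) \<in> M" using sub_add[OF subM 1(1) 2(1)] .
    show ?thesis unfolding e using Mx_I[OF m12 refl] phi_eq[OF v m12] phi_eq[OF v 1(1)] phi_eq[OF v 2(1)]
      1(2) 2(2) by simp
  qed
  have sm: "smult_E s a \<in> Mx \<xi> \<and> phi \<xi> (smult_E s a) = s (\<lambda>_. 0) * phi \<xi> a"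
    if a: "a \<in> Mx \<xi>" for a s
  proof -
    obtain m c where 1: "m \<in> M" "a = (\<lambda>\<alpha>. m \<alpha> + c * \<xi> \<alpha>)" using Mx_E[OF a] by blast
    obtain m'' where m'': "m'' \<in> M" "smult_E s a = (\<lambda>\<beta>. m'' \<beta> + (c * s (\<lambda>_. 0)) * \<xi> \<beta>)"
      using smult_Mx[OF v 1(1)] 1(2) by blast
    have x1: "smult_E s a \<in> Mx \<xi>" unfolding m''(2) by (rule Mx_I[OF m''(1) refl])
    have x2: "phi \<xi> (smult_E s a) = c * s (\<lambda>_. 0)" unfolding m''(2) by (rule phi_eq[OF v m''(1)])
    have x3: "phi \<xi> a = c" unfolding 1(2) by (rule phi_eq[OF v 1(1)])
    show ?thesis using x1 x2 x3 by (simp add: mult.commute)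
  qed
  show "submodule (Mx \<xi>)"
    unfolding submodule_def
  proof (intro conjI ballI allI)
    show "Mx \<xi> \<subseteq> Collect is_E" using MxN NE by blast
    show "(\<lambda>_. 0) \<in> Mx \<xi>" using MMx sub_zero[OF subM] by blast
    show "\<And>a b. a \<in> Mx \<xi> \<Longrightarrow> b \<in> Mx \<xi> \<Longrightarrow> (\<lambda>\<alpha>. a \<alpha> + b \<alpha>) \<in> Mx \<xi>" using add by blast
    show "\<And>s a. a \<in> Mx \<xi> \<Longrightarrow> smult_E s a \<in> Mx \<xi>" using sm by blast
  qed
  show "quot_iso_K M (Mx \<xi>)"
    unfolding quot_iso_K_def
  proof (rule exI[of _ "phi \<xi>"], intro conjI ballI allI)
    show "\<And>a b. a \<in> Mx \<xi> \<Longrightarrow> b \<in> Mx \<xi> \<Longrightarrow> phi \<xi> (\<lambda>\<alpha>. a \<alpha> + b \<alpha>) = phi \<xi> a + phi \<xi> b" using add by blast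
    show "\<And>s a. a \<in> Mx \<xi> \<Longrightarrow> phi \<xi> (smult_E s a) = s (\<lambda>_. 0) * phi \<xi> a" using sm by blast
    show "phi \<xi> ` Mx \<xi> = UNIV"
    proof -
      have "\<forall>c. c \<in> phi \<xi> ` Mx \<xi>"
      proof
        fix c
        have x: "(\<lambda>\<alpha>. (\<lambda>_. 0) \<alpha> + c * \<xi> \<alpha>) \<in> Mx \<xi>" by (rule Mx_I[OF sub_zero[OF subM] refl])
        have "phi \<xi> (\<lambda>\<alpha>. (\<lambda>_. 0) \<alpha> + c * \<xi> \<alpha>) = c" by (rule phi_eq[OF v sub_zero[OF subM]])
        then show "c \<in> phi \<xi> ` Mx \<xi>" by (rule image_eqI[OF sym x])
      qed
      then show ?thesis by blast
    qed
    show "{a \<in> Mx \<xi>. phi \<xi> a = 0} = M"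
    proof
      show "{a \<in> Mx \<xi>. phi \<xi> a = 0} \<subseteq> M"
      proof
        fix a assume "a \<in> {a \<in> Mx \<xi>. phi \<xi> a = 0}"
        then have a: "a \<in> Mx \<xi>" "phi \<xi> a = 0" by auto
        obtain m c where 1: "m \<in> M" "a = (\<lambda>\<alpha>. m \<alpha> + c * \<xi> \<alpha>)" using Mx_E[OF a(1)] by blast
        have "c = 0" using phi_eq[OF v 1(1)] a(2) 1(2) by simp
        then show "a \<in> M" using 1 by simp
      qed
      show "M \<subseteq> {a \<in> Mx \<xi>. phi \<xi> a = 0}"
      proof
        fix m assume m: "m \<in> M"
        have "phi \<xi> (\<lambda>\<alpha>. m \<alpha> + 0 * \<xi> \<alpha>) = 0" by (rule phi_eq[OF v m])
        then have "phi \<xi> m = 0" by simp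
        moreover have "m \<in> Mx \<xi>" using MMx m by blast
        ultimately show "m \<in> {a \<in> Mx \<xi>. phi \<xi> a = 0}" by blast
      qed
    qed
  qed
qed

end

context sset begin

lemma same_LT:
  assumes v1: "valid_step ord N M \<xi>" and v2: "valid_step ord N M \<xi>'"
  shows "LT ord \<xi>' = LT ord \<xi>"
proof -
  have "le_ord ord (LT ord \<xi>) (LT ord \<xi>')" by (rule valid_min[OF v1 valid_D(1,2,3)[OF v2]])
  moreover have "le_ord ord (LT ord \<xi>') (LT ord \<xi>)" by (rule valid_min[OF v2 valid_D(1,2,3)[OF v1]])
  ultimately show ?thesis using le_ord_antisym[OF to] by blast
qed

lemma xi'_in:
  assumes v1: "valid_step ord N M \<xi>" and v2: "valid_step ord N M \<xi>'"
  shows "\<xi>' \<in> Mx \<xi>"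
proof -
  let ?L = "LT ord \<xi>"
  define \<delta> where "\<delta> = (\<lambda>\<alpha>. \<xi>' \<alpha> - (\<xi>' ?L / \<xi> ?L) * \<xi> \<alpha>)"
  have \<delta>N: "\<delta> \<in> N" unfolding \<delta>_def by (rule sub_diff[OF subN valid_D(1)[OF v2] valid_D(1)[OF v1]])
  have can: "\<delta> \<noteq> (\<lambda>_. 0) \<Longrightarrow> ord (LT ord \<delta>) ?L"
    using cancel(2)[OF to NE[OF valid_D(1)[OF v2]] NE[OF valid_D(1)[OF v1]] valid_D(2)[OF v2] valid_D(2)[OF v1]
        same_LT[OF v1 v2] refl] unfolding \<delta>_def by blast
  have \<delta>M: "\<delta> \<in> M" by (rule below_in_M[OF v1 \<delta>N can])
  have "\<xi>' = (\<lambda>\<alpha>. \<delta> \<alpha> + (\<xi>' ?L / \<xi> ?L) * \<xi> \<alpha>)" unfolding \<delta>_def by simp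
  then show ?thesis by (rule Mx_I[OF \<delta>M])
qed

lemma Mx_sub:
  assumes x: "x \<in> Mx \<xi>"
  shows "Mx x \<subseteq> Mx \<xi>"
proof
  fix y assume y: "y \<in> Mx x"
  obtain m c where 1: "m \<in> M" "x = (\<lambda>\<alpha>. m \<alpha> + c * \<xi> \<alpha>)" using Mx_E[OF x] by blast
  obtain m2 d where 2: "m2 \<in> M" "y = (\<lambda>\<alpha>. m2 \<alpha> + d * x \<alpha>)" using Mx_E[OF y] by blast
  have m: "(\<lambda>\<alpha>. m2 \<alpha> + d * m \<alpha>) \<in> M" by (rule sub_lin[OF subM 2(1) 1(1)])
  have "y = (\<lambda>\<alpha>. (\<lambda>\<alpha>. m2 \<alpha> + d * m \<alpha>) \<alpha> + (d * c) * \<xi> \<alpha>)"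
    unfolding 2(2) 1(2) by (rule ext) (simp add: algebra_simps)
  then show "y \<in> Mx \<xi>" by (rule Mx_I[OF m])
qed

lemma Mx_same:
  assumes v1: "valid_step ord N M \<xi>" and v2: "valid_step ord N M \<xi>'"
  shows "Mx \<xi>' = Mx \<xi>"
  using Mx_sub[OF xi'_in[OF v1 v2]] Mx_sub[OF xi'_in[OF v2 v1]] by blast

lemma nf_aux:
  "\<forall>\<eta>\<in>N. (\<forall>\<alpha>. \<eta> \<alpha> \<noteq> 0 \<and> \<alpha> \<in> LTs ord M \<longrightarrow> card {\<beta>\<in>S. ord \<beta> \<alpha>} < n)
     \<longrightarrow> (\<exists>m\<in>M. \<forall>\<alpha>. \<eta> \<alpha> - m \<alpha> \<noteq> 0 \<longrightarrow> \<alpha> \<notin> LTs ord M)"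
proof (induction n)
  case 0
  show ?case
  proof (intro ballI impI)
    fix \<eta> assume "\<eta> \<in> N" "\<forall>\<alpha>. \<eta> \<alpha> \<noteq> 0 \<and> \<alpha> \<in> LTs ord M \<longrightarrow> card {\<beta> \<in> S. ord \<beta> \<alpha>} < 0"
    then show "\<exists>m\<in>M. \<forall>\<alpha>. \<eta> \<alpha> - m \<alpha> \<noteq> 0 \<longrightarrow> \<alpha> \<notin> LTs ord M"
      using sub_zero[OF subM] by (intro bexI[where x="\<lambda>_. 0"]) auto
  qed
next
  case (Suc n)
  show ?case
  proof (intro ballI impI)
    fix \<eta> assume \<eta>N: "\<eta> \<in> N" and H: "\<forall>\<alpha>. \<eta> \<alpha> \<noteq> 0 \<and> \<alpha> \<in> LTs ord M \<longrightarrow> card {\<beta> \<in> S. ord \<beta> \<alpha>} < Suc n"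
    let ?B = "{\<alpha>. \<eta> \<alpha> \<noteq> 0 \<and> \<alpha> \<in> LTs ord M}"
    show "\<exists>m\<in>M. \<forall>\<alpha>. \<eta> \<alpha> - m \<alpha> \<noteq> 0 \<longrightarrow> \<alpha> \<notin> LTs ord M"
    proof (cases "?B = {}")
      case True
      then show ?thesis using sub_zero[OF subM] by (intro bexI[where x="\<lambda>_. 0"]) auto
    next
      case False
      have fB: "finite ?B" using finS hS[OF \<eta>N] by (metis (mono_tags, lifting) finite_subset mem_Collect_eq subsetI)
      obtain \<alpha> where \<alpha>: "\<alpha> \<in> ?B" "\<forall>b\<in>?B. le_ord ord b \<alpha>" using ord_max[OF to fB False] by blast
      obtain m1 where m1: "m1 \<in> M" "m1 \<noteq> (\<lambda>_. 0)" "LT ord m1 = \<alpha>" using LTs_E \<alpha>(1) by blast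
      have m1E: "is_E m1" by (rule ME[OF m1(1)])
      have m1a: "m1 \<alpha> \<noteq> 0" using LT_char(1)[OF to m1E m1(2)] m1(3) by simp
      define \<eta>' where "\<eta>' = (\<lambda>\<beta>. \<eta> \<beta> - (\<eta> \<alpha> / m1 \<alpha>) * m1 \<beta>)"
      have \<eta>'N: "\<eta>' \<in> N" unfolding \<eta>'_def using sub_diff[OF subN \<eta>N] m1(1) MN by blast
      have bad: "ord \<beta> \<alpha>" if b: "\<eta>' \<beta> \<noteq> 0" "\<beta> \<in> LTs ord M" for \<beta>
      proof (rule ccontr)
        assume "\<not> ord \<beta> \<alpha>"
        then have "le_ord ord \<alpha> \<beta>" using not_ord_le[OF to] by blast
        moreover have "\<beta> \<noteq> \<alpha>" using b(1) m1a unfolding \<eta>'_def by auto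
        ultimately have o: "ord \<alpha> \<beta>" unfolding le_ord_def by blast
        have "m1 \<beta> = 0"
        proof (rule ccontr)
          assume "m1 \<beta> \<noteq> 0"
          then have "le_ord ord \<beta> \<alpha>" using LT_char(2)[OF to m1E m1(2)] m1(3) by blast
          then show False using le_not_ord[OF to] o by blast
        qed
        then have "\<eta> \<beta> \<noteq> 0" using b(1) unfolding \<eta>'_def by simp
        then have "le_ord ord \<beta> \<alpha>" using \<alpha>(2) b(2) by blast
        then show False using le_not_ord[OF to] o by blast
      qed
      have "\<forall>\<beta>. \<eta>' \<beta> \<noteq> 0 \<and> \<beta> \<in> LTs ord M \<longrightarrow> card {\<gamma>\<in>S. ord \<gamma> \<beta>} < n"
      proof (intro allI impI)
        fix \<beta> assume b: "\<eta>' \<beta> \<noteq> 0 \<and> \<beta> \<in> LTs ord M"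
        have o: "ord \<beta> \<alpha>" using bad b by blast
        have bS: "\<beta> \<in> S" using hS[OF \<eta>'N] b by blast
        have "{\<gamma>\<in>S. ord \<gamma> \<beta>} \<subset> {\<gamma>\<in>S. ord \<gamma> \<alpha>}"
        proof
          show "{\<gamma>\<in>S. ord \<gamma> \<beta>} \<subseteq> {\<gamma>\<in>S. ord \<gamma> \<alpha>}"
          proof
            fix x assume "x \<in> {\<gamma>\<in>S. ord \<gamma> \<beta>}"
            then show "x \<in> {\<gamma>\<in>S. ord \<gamma> \<alpha>}" using to_trans[OF to, of x \<beta> \<alpha>] o by simp
          qed
          show "{\<gamma>\<in>S. ord \<gamma> \<beta>} \<noteq> {\<gamma>\<in>S. ord \<gamma> \<alpha>}" using bS o to_irrefl[OF to] by blast
        qed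
        then have "card {\<gamma>\<in>S. ord \<gamma> \<beta>} < card {\<gamma>\<in>S. ord \<gamma> \<alpha>}"
          by (rule psubset_card_mono[rotated]) (simp add: finS)
        moreover have "card {\<gamma>\<in>S. ord \<gamma> \<alpha>} < Suc n" using H \<alpha>(1) by blast
        ultimately show "card {\<gamma>\<in>S. ord \<gamma> \<beta>} < n" by simp
      qed
      then obtain m2 where m2: "m2 \<in> M" "\<forall>\<beta>. \<eta>' \<beta> - m2 \<beta> \<noteq> 0 \<longrightarrow> \<beta> \<notin> LTs ord M"
        using Suc.IH \<eta>'N by blast
      have mm: "(\<lambda>\<beta>. m2 \<beta> + (\<eta> \<alpha> / m1 \<alpha>) * m1 \<beta>) \<in> M" by (rule sub_lin[OF subM m2(1) m1(1)])
      have "\<forall>\<beta>. \<eta> \<beta> - (m2 \<beta> + (\<eta> \<alpha> / m1 \<alpha>) * m1 \<beta>) \<noteq> 0 \<longrightarrow> \<beta> \<notin> LTs ord M"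
      proof (intro allI)
        fix \<beta>
        have e: "\<eta> \<beta> - (m2 \<beta> + (\<eta> \<alpha> / m1 \<alpha>) * m1 \<beta>) = \<eta>' \<beta> - m2 \<beta>" unfolding \<eta>'_def by simp
        show "\<eta> \<beta> - (m2 \<beta> + (\<eta> \<alpha> / m1 \<alpha>) * m1 \<beta>) \<noteq> 0 \<longrightarrow> \<beta> \<notin> LTs ord M" unfolding e using m2(2) by blast
      qed
      then show ?thesis using mm by (intro bexI[where x="\<lambda>\<beta>. m2 \<beta> + (\<eta> \<alpha> / m1 \<alpha>) * m1 \<beta>"]) simp_all
    qed
  qed
qed

lemma nf:
  assumes "\<eta> \<in> N"
  shows "\<exists>m\<in>M. \<forall>\<alpha>. \<eta> \<alpha> - m \<alpha> \<noteq> 0 \<longrightarrow> \<alpha> \<notin> LTs ord M"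
proof -
  have "\<forall>\<alpha>. \<eta> \<alpha> \<noteq> 0 \<and> \<alpha> \<in> LTs ord M \<longrightarrow> card {\<beta>\<in>S. ord \<beta> \<alpha>} < Suc (card S)"
    using card_mono[OF finS, of "{\<beta>\<in>S. ord \<beta> _}"] by (simp add: le_imp_less_Suc)
  then show ?thesis using nf_aux assms by blast
qed

end

context sset begin

lemma reduced_exists:
  assumes v: "valid_step ord N M \<xi>"
  shows "\<exists>\<zeta>. valid_step ord N M \<zeta> \<and> (\<forall>\<alpha>. \<zeta> \<alpha> \<noteq> 0 \<longrightarrow> \<alpha> \<notin> LTs ord M)"
proof -
  have \<xi>N: "\<xi> \<in> N" and \<xi>0: "\<xi> \<noteq> (\<lambda>_. 0)" using valid_D[OF v] by auto
  have \<xi>E: "is_E \<xi>" by (rule NE[OF \<xi>N])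
  obtain m where m: "m \<in> M" and red: "\<forall>\<alpha>. \<xi> \<alpha> - m \<alpha> \<noteq> 0 \<longrightarrow> \<alpha> \<notin> LTs ord M" using nf[OF \<xi>N] by blast
  define \<zeta> where "\<zeta> = (\<lambda>\<alpha>. \<xi> \<alpha> - m \<alpha>)"
  have \<zeta>N: "\<zeta> \<in> N" unfolding \<zeta>_def using sub_minus[OF subN \<xi>N] m MN by blast
  have red': "\<forall>\<alpha>. \<zeta> \<alpha> \<noteq> 0 \<longrightarrow> \<alpha> \<notin> LTs ord M" using red unfolding \<zeta>_def by blast
  have \<zeta>0: "\<zeta> \<noteq> (\<lambda>_. 0)"
  proof
    assume "\<zeta> = (\<lambda>_. 0)"
    then have "\<xi> = m" unfolding \<zeta>_def by (simp add: fun_eq_iff)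
    then show False using valid_not_in[OF v] m by blast
  qed
  have \<zeta>E: "is_E \<zeta>" by (rule NE[OF \<zeta>N])
  have LTz: "LT ord \<zeta> \<notin> LTs ord M" using red' LT_char(1)[OF to \<zeta>E \<zeta>0] by blast
  have le1: "le_ord ord (LT ord \<xi>) (LT ord \<zeta>)" by (rule valid_min[OF v \<zeta>N \<zeta>0 LTz])
  have no: "\<not> ord (LT ord \<xi>) (LT ord \<zeta>)"
  proof
    assume oz: "ord (LT ord \<xi>) (LT ord \<zeta>)"
    let ?L' = "LT ord \<zeta>"
    have x0: "\<xi> ?L' = 0"
    proof (rule ccontr)
      assume "\<xi> ?L' \<noteq> 0"
      then have "le_ord ord ?L' (LT ord \<xi>)" by (rule LT_char(2)[OF to \<xi>E \<xi>0])
      then show False using le_not_ord[OF to] oz by blast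
    qed
    have "\<zeta> ?L' \<noteq> 0" by (rule LT_char(1)[OF to \<zeta>E \<zeta>0])
    then have mL: "m ?L' \<noteq> 0" using x0 unfolding \<zeta>_def by simp
    then have m0: "m \<noteq> (\<lambda>_. 0)" by auto
    have mE: "is_E m" by (rule ME[OF m])
    let ?Lm = "LT ord m"
    have le: "le_ord ord ?L' ?Lm" using mL by (rule LT_char(2)[OF to mE m0])
    have o2: "ord (LT ord \<xi>) ?Lm" using ord_le_ord_trans[OF to oz le] by simp
    have x1: "\<xi> ?Lm = 0"
    proof (rule ccontr)
      assume "\<xi> ?Lm \<noteq> 0"
      then have "le_ord ord ?Lm (LT ord \<xi>)" by (rule LT_char(2)[OF to \<xi>E \<xi>0])
      then show False using le_not_ord[OF to] o2 by blast
    qed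
    have "m ?Lm \<noteq> 0" by (rule LT_char(1)[OF to mE m0])
    then have "\<zeta> ?Lm \<noteq> 0" using x1 unfolding \<zeta>_def by simp
    moreover have "?Lm \<in> LTs ord M" by (rule LTs_I[OF m m0])
    ultimately show False using red' by blast
  qed
  have eqL: "LT ord \<zeta> = LT ord \<xi>" using le1 no unfolding le_ord_def by metis
  have "valid_step ord N M \<zeta>"
    unfolding valid_step_def
  proof (intro conjI ballI impI)
    show "\<zeta> \<in> N" "\<zeta> \<noteq> (\<lambda>_. 0)" "LT ord \<zeta> \<notin> LTs ord M" by fact+
    fix \<eta> assume "\<eta> \<in> N" "\<eta> \<noteq> (\<lambda>_. 0) \<and> LT ord \<eta> \<notin> LTs ord M"
    then show "le_ord ord (LT ord \<zeta>) (LT ord \<eta>)" unfolding eqL using valid_min[OF v] by blast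
  qed
  then show ?thesis using red' by blast
qed

lemma reduced_unique:
  assumes v1: "valid_step ord N M \<zeta>" and r1: "\<forall>\<alpha>. \<zeta> \<alpha> \<noteq> 0 \<longrightarrow> \<alpha> \<notin> LTs ord M"
    and v2: "valid_step ord N M \<zeta>'" and r2: "\<forall>\<alpha>. \<zeta>' \<alpha> \<noteq> 0 \<longrightarrow> \<alpha> \<notin> LTs ord M"
  shows "\<exists>c. c \<noteq> 0 \<and> \<zeta>' = (\<lambda>\<alpha>. c * \<zeta> \<alpha>)"
proof -
  let ?L = "LT ord \<zeta>"
  have \<zeta>N: "\<zeta> \<in> N" and \<zeta>0: "\<zeta> \<noteq> (\<lambda>_. 0)" using valid_D[OF v1] by auto
  have \<zeta>'N: "\<zeta>' \<in> N" and \<zeta>'0: "\<zeta>' \<noteq> (\<lambda>_. 0)" using valid_D[OF v2] by auto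
  have LL: "LT ord \<zeta>' = ?L" by (rule same_LT[OF v1 v2])
  define c where "c = \<zeta>' ?L / \<zeta> ?L"
  define \<delta> where "\<delta> = (\<lambda>\<alpha>. \<zeta>' \<alpha> - c * \<zeta> \<alpha>)"
  have \<delta>N: "\<delta> \<in> N" unfolding \<delta>_def by (rule sub_diff[OF subN \<zeta>'N \<zeta>N])
  have can: "\<delta> \<noteq> (\<lambda>_. 0) \<Longrightarrow> ord (LT ord \<delta>) ?L"
    using cancel(2)[OF to NE[OF \<zeta>'N] NE[OF \<zeta>N] \<zeta>'0 \<zeta>0 LL refl] unfolding \<delta>_def c_def by blast
  have \<delta>0: "\<delta> = (\<lambda>_. 0)"
  proof (rule ccontr)
    assume d0: "\<delta> \<noteq> (\<lambda>_. 0)"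
    have "\<delta> (LT ord \<delta>) \<noteq> 0" by (rule LT_char(1)[OF to NE[OF \<delta>N] d0])
    then have "\<zeta>' (LT ord \<delta>) \<noteq> 0 \<or> \<zeta> (LT ord \<delta>) \<noteq> 0" unfolding \<delta>_def by auto
    then have "LT ord \<delta> \<notin> LTs ord M" using r1 r2 by blast
    then have "le_ord ord ?L (LT ord \<delta>)" by (rule valid_min[OF v1 \<delta>N d0])
    then show False using le_not_ord[OF to] can[OF d0] by blast
  qed
  then have e: "\<zeta>' = (\<lambda>\<alpha>. c * \<zeta> \<alpha>)" unfolding \<delta>_def by (simp add: fun_eq_iff)
  have "\<zeta>' ?L \<noteq> 0" using LT_char(1)[OF to NE[OF \<zeta>'N] \<zeta>'0] LL by simp
  moreover have "\<zeta> ?L \<noteq> 0" by (rule LT_char(1)[OF to NE[OF \<zeta>N] \<zeta>0])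
  ultimately have "c \<noteq> 0" unfolding c_def by simp
  then show ?thesis using e by blast
qed

lemma exists_valid:
  assumes ne: "M \<noteq> N"
  shows "\<exists>\<xi>. valid_step ord N M \<xi>"
proof -
  let ?A = "{LT ord \<eta> | \<eta>. \<eta> \<in> N \<and> \<eta> \<noteq> (\<lambda>_. 0) \<and> LT ord \<eta> \<notin> LTs ord M}"
  have Ane: "?A \<noteq> {}"
  proof
    assume A0: "?A = {}"
    have "\<eta> \<in> M" if "\<eta> \<in> N" for \<eta>
    proof (rule reduce[of UNIV])
      fix \<eta>' assume h: "\<eta>' \<in> N" "\<eta>' \<noteq> (\<lambda>_. 0)" "LT ord \<eta>' \<in> UNIV"
      show "LT ord \<eta>' \<in> LTs ord M"
      proof (rule ccontr)
        assume "LT ord \<eta>' \<notin> LTs ord M"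
        then have "LT ord \<eta>' \<in> ?A" using h(1,2) by blast
        then show False using A0 by simp
      qed
    next
      show "\<eta> \<in> N" by (rule that)
    qed auto
    then show False using ne MN by blast
  qed
  have "?A \<subseteq> S" using LT_S by blast
  then have fA: "finite ?A" using finS finite_subset by blast
  obtain a where a: "a \<in> ?A" "\<forall>b\<in>?A. le_ord ord a b" using ord_min[OF to fA Ane] by blast
  obtain \<zeta> where \<zeta>: "a = LT ord \<zeta>" "\<zeta> \<in> N" "\<zeta> \<noteq> (\<lambda>_. 0)" "LT ord \<zeta> \<notin> LTs ord M" using a(1) by blast
  have "valid_step ord N M \<zeta>"
    unfolding valid_step_def
  proof (intro conjI ballI impI)
    show "\<zeta> \<in> N" "\<zeta> \<noteq> (\<lambda>_. 0)" "LT ord \<zeta> \<notin> LTs ord M" using \<zeta> by auto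
    fix \<eta> assume "\<eta> \<in> N" "\<eta> \<noteq> (\<lambda>_. 0) \<and> LT ord \<eta> \<notin> LTs ord M"
    then have "LT ord \<eta> \<in> ?A" by blast
    then show "le_ord ord (LT ord \<zeta>) (LT ord \<eta>)" using a(2) \<zeta>(1) by blast
  qed
  then show ?thesis by blast
qed

end

lemma gen_sub_props:
  assumes N: "submodule N" and AN: "A \<subseteq> N"
  shows "submodule (gen_sub A)" "gen_sub A \<subseteq> N"
proof -
  let ?F = "{M. submodule M \<and> A \<subseteq> M}"
  have NF: "N \<in> ?F" using N AN by blast
  show GN: "gen_sub A \<subseteq> N" unfolding gen_sub_def using NF by blast
  have z: "(\<lambda>_. 0) \<in> gen_sub A" unfolding gen_sub_def using sub_zero by blast
  have a: "(\<lambda>\<alpha>. a \<alpha> + b \<alpha>) \<in> gen_sub A" if "a \<in> gen_sub A" "b \<in> gen_sub A" for a b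
  proof -
    have "\<forall>M\<in>?F. (\<lambda>\<alpha>. a \<alpha> + b \<alpha>) \<in> M"
    proof
      fix M assume M: "M \<in> ?F"
      then have "a \<in> M" "b \<in> M" using that unfolding gen_sub_def by blast+
      then show "(\<lambda>\<alpha>. a \<alpha> + b \<alpha>) \<in> M" using sub_add M by blast
    qed
    then show ?thesis unfolding gen_sub_def by blast
  qed
  have s: "smult_E s a \<in> gen_sub A" if "a \<in> gen_sub A" for a s
  proof -
    have "\<forall>M\<in>?F. smult_E s a \<in> M"
    proof
      fix M assume M: "M \<in> ?F"
      then have "a \<in> M" using that unfolding gen_sub_def by blast
      then show "smult_E s a \<in> M" using sub_smult M by blast
    qed
    then show ?thesis unfolding gen_sub_def by blast
  qed
  have e: "gen_sub A \<subseteq> Collect is_E" using GN sub_E[OF N] by blast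
  show "submodule (gen_sub A)" unfolding submodule_def using z a s e by blast
qed

lemma cyclic_zero: "cyclic (\<lambda>_. 0) = {\<lambda>_. 0}"
  unfolding cyclic_def smult_E_def by simp

lemma sum_sub_zero: "sum_sub M {\<lambda>_. 0} = M"
  unfolding sum_sub_def by simp

lemma mk_sset:
  "term_order ord \<Longrightarrow> submodule N \<Longrightarrow> submodule M \<Longrightarrow> M \<subseteq> N \<Longrightarrow> finite S
    \<Longrightarrow> (\<And>\<eta> \<alpha>. \<eta> \<in> N \<Longrightarrow> \<eta> \<alpha> \<noteq> 0 \<Longrightarrow> \<alpha> \<in> S) \<Longrightarrow> sset ord N M S"
  unfolding sset_def by blast

lemma LTs_mono: "A \<subseteq> B \<Longrightarrow> LTs ord A \<subseteq> LTs ord B"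
  unfolding LTs_def by blast

definition Fch where
  "Fch ord N M = (if M = N then (\<lambda>_. 0) else SOME \<zeta>. valid_step ord N M \<zeta>)"

fun Gseq where
  "Gseq ord N 0 = T1 N"
| "Gseq ord N (Suc i) = sum_sub (Gseq ord N i) (cyclic (Fch ord N (Gseq ord N i)))"

theorem theorem3p9:
  fixes ord :: "('v::finite \<Rightarrow> nat) \<Rightarrow> ('v \<Rightarrow> nat) \<Rightarrow> bool"
    and N :: "(('v \<Rightarrow> nat) \<Rightarrow> 'k::field) set"
  assumes "term_order ord" and "submodule N" and "finite_length N"
  shows "(\<exists>\<xi>. valid_run ord N \<xi>) \<and>
    (\<forall>\<xi>. valid_run ord N \<xi> \<longrightarrow>
      (\<exists>k. Nseq N \<xi> 0 = T1 N \<and> Nseq N \<xi> k = N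
        \<and> (\<forall>i\<le>k. submodule (Nseq N \<xi> i))
        \<and> (\<forall>i<k. Nseq N \<xi> i \<subset> Nseq N \<xi> (Suc i))
        \<and> (\<forall>i\<in>{1..k}. quot_iso_K (Nseq N \<xi> (i - 1)) (Nseq N \<xi> i))
        \<and> (\<forall>i j. 1 \<le> i \<and> i < j \<and> j \<le> k \<longrightarrow> ord (LT ord (\<xi> i)) (LT ord (\<xi> j)))
        \<and> (\<forall>\<xi>'. valid_run ord N \<xi>' \<longrightarrow> (\<forall>i\<le>k. Nseq N \<xi>' i = Nseq N \<xi> i))
        \<and> (\<forall>i\<in>{1..k}.
             (\<exists>\<zeta>. valid_step ord N (Nseq N \<xi> (i - 1)) \<zeta>
                  \<and> (\<forall>\<alpha>. \<zeta> \<alpha> \<noteq> 0 \<longrightarrow> \<alpha> \<notin> LTs ord (Nseq N \<xi> (i - 1))))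
           \<and> (\<forall>\<zeta> \<zeta>'. valid_step ord N (Nseq N \<xi> (i - 1)) \<zeta>
                  \<and> (\<forall>\<alpha>. \<zeta> \<alpha> \<noteq> 0 \<longrightarrow> \<alpha> \<notin> LTs ord (Nseq N \<xi> (i - 1)))
                  \<and> valid_step ord N (Nseq N \<xi> (i - 1)) \<zeta>'
                  \<and> (\<forall>\<alpha>. \<zeta>' \<alpha> \<noteq> 0 \<longrightarrow> \<alpha> \<notin> LTs ord (Nseq N \<xi> (i - 1)))
                  \<longrightarrow> (\<exists>c::'k. c \<noteq> 0 \<and> \<zeta>' = (\<lambda>\<alpha>. c * \<zeta> \<alpha>))))))"
proof -
  note to = assms(1) and subN = assms(2) and fl = assms(3)
  define S where "S = {\<alpha>. \<exists>\<eta>\<in>N. \<eta> \<alpha> \<noteq> 0}"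
  have finS: "finite S" unfolding S_def by (rule finite_supp[OF subN fl])
  have hS: "\<And>\<eta> \<alpha>. \<eta> \<in> N \<Longrightarrow> \<eta> \<alpha> \<noteq> 0 \<Longrightarrow> \<alpha> \<in> S" unfolding S_def by blast
  have loc: "sset ord N M S" if "submodule M" "M \<subseteq> N" for M
    by (rule mk_sset[OF to subN that finS hS])
  have T1p: "submodule (T1 N)" "T1 N \<subseteq> N"
    using gen_sub_props[OF subN, of "{\<eta>\<in>N. \<exists>\<alpha>. \<eta> = term_E \<alpha>}"] unfolding T1_def by auto
  have step: "submodule (sum_sub M (cyclic \<zeta>)) \<and> sum_sub M (cyclic \<zeta>) \<subseteq> N \<and> M \<subset> sum_sub M (cyclic \<zeta>)
      \<and> quot_iso_K M (sum_sub M (cyclic \<zeta>)) \<and> \<zeta> \<in> sum_sub M (cyclic \<zeta>)"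
    if "submodule M" "M \<subseteq> N" "valid_step ord N M \<zeta>" for M \<zeta>
    using sset.Mx_eq[OF loc[OF that(1,2)] that(3)] sset.Mx_props[OF loc[OF that(1,2)] that(3)] by simp
  have same: "sum_sub M (cyclic \<zeta>') = sum_sub M (cyclic \<zeta>)"
    if "submodule M" "M \<subseteq> N" "valid_step ord N M \<zeta>" "valid_step ord N M \<zeta>'" for M \<zeta> \<zeta>'
    using sset.Mx_eq[OF loc[OF that(1,2)] that(3)] sset.Mx_eq[OF loc[OF that(1,2)] that(4)]
      sset.Mx_same[OF loc[OF that(1,2)] that(3,4)] by simp
  have run_good: "submodule (Nseq N \<xi> i) \<and> Nseq N \<xi> i \<subseteq> N"
    if vr: "valid_run ord N \<xi>" and ne: "\<forall>j<i. Nseq N \<xi> j \<noteq> N" for \<xi> i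
    using ne
  proof (induction i)
    case 0 then show ?case using T1p by simp
  next
    case (Suc i)
    then have IH: "submodule (Nseq N \<xi> i)" "Nseq N \<xi> i \<subseteq> N" by auto
    have "Nseq N \<xi> i \<noteq> N" using Suc.prems by blast
    then have "valid_step ord N (Nseq N \<xi> i) (\<xi> (Suc i))" using vr unfolding valid_run_def by blast
    then show ?case using step[OF IH] by simp
  qed
  have Gp: "submodule (Gseq ord N i) \<and> Gseq ord N i \<subseteq> N" for i
  proof (induction i)
    case 0 then show ?case using T1p by simp
  next
    case (Suc i)
    show ?case
    proof (cases "Gseq ord N i = N")
      case True
      then show ?thesis using subN by (simp add: Fch_def cyclic_zero sum_sub_zero)
    next
      case False
      have "\<exists>\<zeta>. valid_step ord N (Gseq ord N i) \<zeta>"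
        using sset.exists_valid[OF loc[OF conjunct1[OF Suc.IH] conjunct2[OF Suc.IH]] False] .
      then have "valid_step ord N (Gseq ord N i) (Fch ord N (Gseq ord N i))"
        unfolding Fch_def using False by (simp add: someI_ex)
      then show ?thesis using step[OF conjunct1[OF Suc.IH] conjunct2[OF Suc.IH]] by simp
    qed
  qed
  define \<xi>0 where "\<xi>0 = (\<lambda>i. case i of 0 \<Rightarrow> (\<lambda>_. 0) | Suc j \<Rightarrow> Fch ord N (Gseq ord N j))"
  have NG: "Nseq N \<xi>0 i = Gseq ord N i" for i
    by (induction i) (simp_all add: \<xi>0_def)
  have "valid_run ord N \<xi>0"
    unfolding valid_run_def
  proof (intro allI impI)
    fix i assume "Nseq N \<xi>0 i \<noteq> N"
    then have ne: "Gseq ord N i \<noteq> N" using NG by simp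
    have "\<exists>\<zeta>. valid_step ord N (Gseq ord N i) \<zeta>"
      using sset.exists_valid[OF loc[OF conjunct1[OF Gp] conjunct2[OF Gp]] ne] .
    then have "valid_step ord N (Gseq ord N i) (Fch ord N (Gseq ord N i))"
      unfolding Fch_def using ne by (simp add: someI_ex)
    then show "valid_step ord N (Nseq N \<xi>0 i) (\<xi>0 (Suc i))" using NG by (simp add: \<xi>0_def)
  qed
  then have part1: "\<exists>\<xi>. valid_run ord N \<xi>" by blast
  have part2: "\<exists>k. Nseq N \<xi> 0 = T1 N \<and> Nseq N \<xi> k = N
        \<and> (\<forall>i\<le>k. submodule (Nseq N \<xi> i))
        \<and> (\<forall>i<k. Nseq N \<xi> i \<subset> Nseq N \<xi> (Suc i))
        \<and> (\<forall>i\<in>{1..k}. quot_iso_K (Nseq N \<xi> (i - 1)) (Nseq N \<xi> i))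
        \<and> (\<forall>i j. 1 \<le> i \<and> i < j \<and> j \<le> k \<longrightarrow> ord (LT ord (\<xi> i)) (LT ord (\<xi> j)))
        \<and> (\<forall>\<xi>'. valid_run ord N \<xi>' \<longrightarrow> (\<forall>i\<le>k. Nseq N \<xi>' i = Nseq N \<xi> i))
        \<and> (\<forall>i\<in>{1..k}.
             (\<exists>\<zeta>. valid_step ord N (Nseq N \<xi> (i - 1)) \<zeta>
                  \<and> (\<forall>\<alpha>. \<zeta> \<alpha> \<noteq> 0 \<longrightarrow> \<alpha> \<notin> LTs ord (Nseq N \<xi> (i - 1))))
           \<and> (\<forall>\<zeta> \<zeta>'. valid_step ord N (Nseq N \<xi> (i - 1)) \<zeta>
                  \<and> (\<forall>\<alpha>. \<zeta> \<alpha> \<noteq> 0 \<longrightarrow> \<alpha> \<notin> LTs ord (Nseq N \<xi> (i - 1)))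
                  \<and> valid_step ord N (Nseq N \<xi> (i - 1)) \<zeta>'
                  \<and> (\<forall>\<alpha>. \<zeta>' \<alpha> \<noteq> 0 \<longrightarrow> \<alpha> \<notin> LTs ord (Nseq N \<xi> (i - 1)))
                  \<longrightarrow> (\<exists>c::'k. c \<noteq> 0 \<and> \<zeta>' = (\<lambda>\<alpha>. c * \<zeta> \<alpha>))))"
    if vr: "valid_run ord N \<xi>" for \<xi>
  proof -
    have exN: "\<exists>i. Nseq N \<xi> i = N"
    proof (rule ccontr)
      assume "\<nexists>i. Nseq N \<xi> i = N"
      then have all: "\<forall>i. Nseq N \<xi> i \<noteq> N" by blast
      obtain m where m: "\<forall>(c::nat \<Rightarrow> (('v \<Rightarrow> nat) \<Rightarrow> 'k) set) k.
         (\<forall>i\<le>k. submodule (c i) \<and> c i \<subseteq> N) \<and> (\<forall>i<k. c i \<subset> c (Suc i)) \<longrightarrow> k \<le> m"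
        using fl unfolding finite_length_def by blast
      have g: "\<forall>i\<le>Suc m. submodule (Nseq N \<xi> i) \<and> Nseq N \<xi> i \<subseteq> N" using run_good[OF vr] all by blast
      have "\<forall>i<Suc m. Nseq N \<xi> i \<subset> Nseq N \<xi> (Suc i)"
      proof (intro allI impI)
        fix i assume "i < Suc m"
        have gi: "submodule (Nseq N \<xi> i)" "Nseq N \<xi> i \<subseteq> N" using run_good[OF vr] all by blast+
        have "valid_step ord N (Nseq N \<xi> i) (\<xi> (Suc i))" using vr all unfolding valid_run_def by blast
        then show "Nseq N \<xi> i \<subset> Nseq N \<xi> (Suc i)" using step[OF gi] by simp
      qed
      then have "Suc m \<le> m" using m g by blast
      then show False by simp
    qed
    define k where "k = (LEAST i. Nseq N \<xi> i = N)"
    have kN: "Nseq N \<xi> k = N" unfolding k_def using LeastI_ex[OF exN] .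
    have bk: "Nseq N \<xi> j \<noteq> N" if "j < k" for j using not_less_Least[OF that[unfolded k_def]] by blast
    have good: "submodule (Nseq N \<xi> i) \<and> Nseq N \<xi> i \<subseteq> N" if "i \<le> k" for i
      using run_good[OF vr] bk that by (meson less_le_trans)
    have vs: "valid_step ord N (Nseq N \<xi> i) (\<xi> (Suc i))" if "i < k" for i
      using vr bk[OF that] unfolding valid_run_def by blast
    have st: "submodule (Nseq N \<xi> (Suc i)) \<and> Nseq N \<xi> (Suc i) \<subseteq> N \<and> Nseq N \<xi> i \<subset> Nseq N \<xi> (Suc i)
      \<and> quot_iso_K (Nseq N \<xi> i) (Nseq N \<xi> (Suc i)) \<and> \<xi> (Suc i) \<in> Nseq N \<xi> (Suc i)" if "i < k" for i
      using step[OF conjunct1[OF good] conjunct2[OF good] vs[OF that]] that by simp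
    have mono: "b \<le> k \<longrightarrow> a \<le> b \<longrightarrow> Nseq N \<xi> a \<subseteq> Nseq N \<xi> b" for a b
    proof (induction b)
      case 0 then show ?case by simp
    next
      case (Suc b)
      show ?case
      proof (intro impI)
        assume h: "Suc b \<le> k" "a \<le> Suc b"
        show "Nseq N \<xi> a \<subseteq> Nseq N \<xi> (Suc b)"
        proof (cases "a = Suc b")
          case True then show ?thesis by simp
        next
          case False
          then have "a \<le> b" using h by simp
          then have "Nseq N \<xi> a \<subseteq> Nseq N \<xi> b" using Suc.IH h by simp
          moreover have "Nseq N \<xi> b \<subset> Nseq N \<xi> (Suc b)" using st[of b] h by simp
          ultimately show ?thesis by blast
        qed
      qed
    qed
    show ?thesis
    proof (rule exI[of _ k], intro conjI)
      show "Nseq N \<xi> 0 = T1 N" by simp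
      show "Nseq N \<xi> k = N" by (rule kN)
      show "\<forall>i\<le>k. submodule (Nseq N \<xi> i)" using good by blast
      show "\<forall>i<k. Nseq N \<xi> i \<subset> Nseq N \<xi> (Suc i)" using st by blast
      show "\<forall>i\<in>{1..k}. quot_iso_K (Nseq N \<xi> (i - 1)) (Nseq N \<xi> i)"
      proof
        fix i assume "i \<in> {1..k}"
        then obtain i0 where i0: "i = Suc i0" "i0 < k" by (cases i) auto
        then show "quot_iso_K (Nseq N \<xi> (i - 1)) (Nseq N \<xi> i)" using st[OF i0(2)] by simp
      qed
      show "\<forall>i j. 1 \<le> i \<and> i < j \<and> j \<le> k \<longrightarrow> ord (LT ord (\<xi> i)) (LT ord (\<xi> j))"
      proof (intro allI impI)
        fix i j assume h: "1 \<le> i \<and> i < j \<and> j \<le> k"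
        obtain i0 where i0: "i = Suc i0" using h by (cases i) auto
        obtain j0 where j0: "j = Suc j0" using h by (cases j) auto
        have ij: "i0 < j0" "j0 < k" "i \<le> j0" using h i0 j0 by auto
        have vi: "valid_step ord N (Nseq N \<xi> i0) (\<xi> i)" using vs[of i0] ij i0 by simp
        have vj: "valid_step ord N (Nseq N \<xi> j0) (\<xi> j)" using vs[of j0] ij j0 by simp
        have xi: "\<xi> i \<in> Nseq N \<xi> i" using st[of i0] ij i0 by simp
        have xi0: "\<xi> i \<noteq> (\<lambda>_. 0)" using vi unfolding valid_step_def by blast
        have "Nseq N \<xi> i \<subseteq> Nseq N \<xi> j0" using mono[of j0 i] ij by simp
        then have LTi: "LT ord (\<xi> i) \<in> LTs ord (Nseq N \<xi> j0)" using xi xi0 unfolding LTs_def by blast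
        have LTj: "LT ord (\<xi> j) \<notin> LTs ord (Nseq N \<xi> j0)" using vj unfolding valid_step_def by blast
        have "Nseq N \<xi> i0 \<subseteq> Nseq N \<xi> j0" using mono[of j0 i0] ij by simp
        then have "LT ord (\<xi> j) \<notin> LTs ord (Nseq N \<xi> i0)" using LTj LTs_mono by blast
        moreover have "\<xi> j \<in> N" "\<xi> j \<noteq> (\<lambda>_. 0)" using vj unfolding valid_step_def by blast+
        ultimately have "le_ord ord (LT ord (\<xi> i)) (LT ord (\<xi> j))" using vi unfolding valid_step_def by blast
        moreover have "LT ord (\<xi> i) \<noteq> LT ord (\<xi> j)" using LTi LTj by metis
        ultimately show "ord (LT ord (\<xi> i)) (LT ord (\<xi> j))" unfolding le_ord_def by blast
      qed
      show "\<forall>\<xi>'. valid_run ord N \<xi>' \<longrightarrow> (\<forall>i\<le>k. Nseq N \<xi>' i = Nseq N \<xi> i)"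
      proof (intro allI impI)
        fix \<xi>' i assume vr': "valid_run ord N \<xi>'" and ik: "i \<le> k"
        show "Nseq N \<xi>' i = Nseq N \<xi> i"
          using ik
        proof (induction i)
          case 0 then show ?case by simp
        next
          case (Suc i)
          then have ik: "i < k" and IH: "Nseq N \<xi>' i = Nseq N \<xi> i" by auto
          have "valid_step ord N (Nseq N \<xi>' i) (\<xi>' (Suc i))" using vr' IH bk[OF ik] unfolding valid_run_def by metis
          then have v': "valid_step ord N (Nseq N \<xi> i) (\<xi>' (Suc i))" using IH by simp
          have gi: "submodule (Nseq N \<xi> i)" "Nseq N \<xi> i \<subseteq> N" using good ik by auto
          show ?case using same[OF gi vs[OF ik] v'] IH by simp
        qed
      qed
      show "\<forall>i\<in>{1..k}.
             (\<exists>\<zeta>. valid_step ord N (Nseq N \<xi> (i - 1)) \<zeta>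
                  \<and> (\<forall>\<alpha>. \<zeta> \<alpha> \<noteq> 0 \<longrightarrow> \<alpha> \<notin> LTs ord (Nseq N \<xi> (i - 1))))
           \<and> (\<forall>\<zeta> \<zeta>'. valid_step ord N (Nseq N \<xi> (i - 1)) \<zeta>
                  \<and> (\<forall>\<alpha>. \<zeta> \<alpha> \<noteq> 0 \<longrightarrow> \<alpha> \<notin> LTs ord (Nseq N \<xi> (i - 1)))
                  \<and> valid_step ord N (Nseq N \<xi> (i - 1)) \<zeta>'
                  \<and> (\<forall>\<alpha>. \<zeta>' \<alpha> \<noteq> 0 \<longrightarrow> \<alpha> \<notin> LTs ord (Nseq N \<xi> (i - 1)))
                  \<longrightarrow> (\<exists>c::'k. c \<noteq> 0 \<and> \<zeta>' = (\<lambda>\<alpha>. c * \<zeta> \<alpha>)))"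
      proof
        fix i assume "i \<in> {1..k}"
        then obtain i0 where i0: "i = Suc i0" "i0 < k" by (cases i) auto
        have gi: "submodule (Nseq N \<xi> i0)" "Nseq N \<xi> i0 \<subseteq> N" using good i0 by auto
        have L: "sset ord N (Nseq N \<xi> i0) S" by (rule loc[OF gi])
        have e: "i - 1 = i0" using i0 by simp
        show "(\<exists>\<zeta>. valid_step ord N (Nseq N \<xi> (i - 1)) \<zeta>
                  \<and> (\<forall>\<alpha>. \<zeta> \<alpha> \<noteq> 0 \<longrightarrow> \<alpha> \<notin> LTs ord (Nseq N \<xi> (i - 1))))
           \<and> (\<forall>\<zeta> \<zeta>'. valid_step ord N (Nseq N \<xi> (i - 1)) \<zeta>
                  \<and> (\<forall>\<alpha>. \<zeta> \<alpha> \<noteq> 0 \<longrightarrow> \<alpha> \<notin> LTs ord (Nseq N \<xi> (i - 1)))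
                  \<and> valid_step ord N (Nseq N \<xi> (i - 1)) \<zeta>'
                  \<and> (\<forall>\<alpha>. \<zeta>' \<alpha> \<noteq> 0 \<longrightarrow> \<alpha> \<notin> LTs ord (Nseq N \<xi> (i - 1)))
                  \<longrightarrow> (\<exists>c::'k. c \<noteq> 0 \<and> \<zeta>' = (\<lambda>\<alpha>. c * \<zeta> \<alpha>)))"
          unfolding e
          using sset.reduced_exists[OF L vs[OF i0(2)]] sset.reduced_unique[OF L] by blast
      qed
    qed
  qed
  show ?thesis using part1 part2 by blast
qed

end
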